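(* Suppose Assumption A1 and Assumption A2(ii) hold, let $K$ be $(\kappa,\gamma)$-strongly stable and $H=\lceil2\gamma^{-1}\log T\rceil$. Then for any $C>0$, $T\ge3$ and $M\in\mathcal M$: $$\mathbb P\Big(\sum_{t=0}^{T-1}\|\nabla_Mf_t(M)\|_F^2\le CT(\log T)^4\Big)\ge1-\frac{26244\sigma_w^4n^2G_c^2\kappa_B^6\kappa^{18}}{C\gamma^8(1-\gamma)^4},$$ $$\mathbb P\Big(\sum_{t=0}^{T-1}\sum_{i=1}^{\min\{H+1,t\}}\sum_{k=1}^i\|\nabla_Mf_{t-k}(M)\|_F\le CT(\log T)^{9/2}\Big)\ge1-\frac{39366\sigma_w^2n^2G_c\kappa_B^3\kappa^9}{C\gamma^{13/2}(1-\gamma)^2}.$$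
   Context: Linear system $x_{t+1}=Ax_t+Bu_t+w_t$, $x_t,w_t\in\mathbb R^{n_x}$, $u_t\in\mathbb R^{n_u}$; $n:=\max\{n_x,n_u\}$, $\kappa_B:=\max\{\|B\|,1\}$; $w_s:=0$ for $s<0$. $(\kappa,\gamma)$-strong stability: complex $P,Q$ with $A-BK=QPQ^{-1}$, $\|P\|\le1-\gamma$, $\|K\|,\|Q\|,\|Q^{-1}\|\le\kappa$. $A_K:=A-BK$. Assumption A1: $c_t$ convex, differentiable, $\|\nabla_xc_t(x,u)\|\le G_c\|x\|$, $\|\nabla_uc_t(x,u)\|\le G_c\|u\|$, $G_c\ge1$. Assumption A2(ii): $\mathbb E\|w_t\|^4\le\sigma_w^4$ for all $t$. For $M=\{M^{[0]},\dots,M^{[H-1]}\}$, $\|M\|_F:=\|[M^{[0]},\dots,M^{[H-1]}]\|_F$; $\mathcal M:=\{M:\|M^{[i]}\|\le2\kappa_B\kappa^3(1-\gamma)^i\}$. Surrogate: $\Psi^{K,h}_{t,i}(M_{t-h:t}):=A_K^i\mathbf 1_{i\le h}+\sum_{j=0}^hA_K^jBM_{t-j}^{[i-j-1]}\mathbf 1_{i-j\in[1,H]}$; $y_t:=\sum_{i=0}^{2H}\Psi^{K,H}_{t-1,i}(M_{t-1-H:t-1})w_{t-1-i}$; $v_t:=-Ky_t+\sum_{i=1}^HM_t^{[i-1]}w_{t-i}$; $F_t(M_{t-1-H:t}):=c_t(y_t,v_t)$; $f_t(M):=F_t(M,\dots,M)$; $\nabla_Mf_t$ is the gradient with respect to all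 entries of $M$. *)

theory Defs
  imports "HOL-Analysis.Analysis" "HOL-Probability.Probability"
begin

text \<open>Matrix power (the built-in power on vec types is componentwise, hence not usable).\<close>
primrec matpow :: "('a::semiring_1)^'n^'n \<Rightarrow> nat \<Rightarrow> 'a^'n^'n" where
  "matpow X 0 = mat 1"
| "matpow X (Suc k) = X ** matpow X k"

definition opnorm :: "('a::real_normed_field)^'n^'m \<Rightarrow> real" where
  "opnorm X = onorm (\<lambda>x. X *v x)"

definition frob :: "real^'n^'m \<Rightarrow> real" where
  "frob X = sqrt (\<Sum>a\<in>UNIV. \<Sum>b\<in>UNIV. (X $ a $ b)^2)"

definition strongly_stable ::
  "real^'nx^'nx \<Rightarrow> real^'nu^'nx \<Rightarrow> real^'nx^'nu \<Rightarrow> real \<Rightarrow> real \<Rightarrow> bool" where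
  "strongly_stable A B K \<kappa> \<gamma> \<longleftrightarrow>
     (\<exists>P Q :: complex^'nx^'nx. invertible Q \<and>
        map_matrix complex_of_real (A - B ** K) = Q ** P ** matrix_inv Q \<and>
        opnorm P \<le> 1 - \<gamma> \<and> opnorm K \<le> \<kappa> \<and> opnorm Q \<le> \<kappa> \<and> opnorm (matrix_inv Q) \<le> \<kappa>)"

definition wext :: "(nat \<Rightarrow> 'w \<Rightarrow> real^'nx) \<Rightarrow> int \<Rightarrow> 'w \<Rightarrow> real^'nx" where
  "wext w s \<omega> = (if s < 0 then 0 else w (nat s) \<omega>)"

text \<open>Surrogate transfer matrix Psi^{K,h}_{t,i}(M_{t-h:t}); Ms s is the policy M_s at time s,
  a family of H matrices M_s^[0..H-1].\<close>
definition Psi ::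
  "real^'nx^'nx \<Rightarrow> real^'nu^'nx \<Rightarrow> real^'nx^'nu \<Rightarrow> nat \<Rightarrow> nat \<Rightarrow>
   (int \<Rightarrow> nat \<Rightarrow> real^'nx^'nu) \<Rightarrow> int \<Rightarrow> nat \<Rightarrow> real^'nx^'nx" where
  "Psi A B K H h Ms t i =
     (if i \<le> h then matpow (A - B ** K) i else 0)
     + (\<Sum>j\<in>{0..h}. if 1 \<le> int i - int j \<and> int i - int j \<le> int H
                     then matpow (A - B ** K) j ** B ** Ms (t - int j) (i - j - 1) else 0)"

definition ystate ::
  "real^'nx^'nx \<Rightarrow> real^'nu^'nx \<Rightarrow> real^'nx^'nu \<Rightarrow> nat \<Rightarrow>
   (int \<Rightarrow> nat \<Rightarrow> real^'nx^'nu) \<Rightarrow> (nat \<Rightarrow> 'w \<Rightarrow> real^'nx) \<Rightarrow> nat \<Rightarrow> 'w \<Rightarrow> real^'nx" where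
  "ystate A B K H Ms w t \<omega> =
     (\<Sum>i\<in>{0..2*H}. Psi A B K H H Ms (int t - 1) i *v wext w (int t - 1 - int i) \<omega>)"

definition vinput ::
  "real^'nx^'nx \<Rightarrow> real^'nu^'nx \<Rightarrow> real^'nx^'nu \<Rightarrow> nat \<Rightarrow>
   (int \<Rightarrow> nat \<Rightarrow> real^'nx^'nu) \<Rightarrow> (nat \<Rightarrow> 'w \<Rightarrow> real^'nx) \<Rightarrow> nat \<Rightarrow> 'w \<Rightarrow> real^'nu" where
  "vinput A B K H Ms w t \<omega> =
     - (K *v ystate A B K H Ms w t \<omega>)
     + (\<Sum>i\<in>{1..H}. Ms (int t) (i - 1) *v wext w (int t - int i) \<omega>)"

definition Fcost ::
  "(nat \<Rightarrow> real^'nx \<Rightarrow> real^'nu \<Rightarrow> real) \<Rightarrow> real^'nx^'nx \<Rightarrow> real^'nu^'nx \<Rightarrow> real^'nx^'nu \<Rightarrow> nat \<Rightarrow>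
   (int \<Rightarrow> nat \<Rightarrow> real^'nx^'nu) \<Rightarrow> (nat \<Rightarrow> 'w \<Rightarrow> real^'nx) \<Rightarrow> nat \<Rightarrow> 'w \<Rightarrow> real" where
  "Fcost c A B K H Ms w t \<omega> = c t (ystate A B K H Ms w t \<omega>) (vinput A B K H Ms w t \<omega>)"

definition fcost ::
  "(nat \<Rightarrow> real^'nx \<Rightarrow> real^'nu \<Rightarrow> real) \<Rightarrow> real^'nx^'nx \<Rightarrow> real^'nu^'nx \<Rightarrow> real^'nx^'nu \<Rightarrow> nat \<Rightarrow>
   (nat \<Rightarrow> real^'nx^'nu) \<Rightarrow> (nat \<Rightarrow> 'w \<Rightarrow> real^'nx) \<Rightarrow> nat \<Rightarrow> 'w \<Rightarrow> real" where
  "fcost c A B K H M w t \<omega> = Fcost c A B K H (\<lambda>_. M) w t \<omega>"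

definition munit :: "'nu \<Rightarrow> 'nx \<Rightarrow> real^'nx^'nu" where
  "munit a b = (\<chi> i j. if i = a \<and> j = b then 1 else 0)"

definition grad_frob ::
  "(nat \<Rightarrow> real^'nx \<Rightarrow> real^'nu \<Rightarrow> real) \<Rightarrow> real^'nx^'nx \<Rightarrow> real^'nu^'nx \<Rightarrow> real^'nx^'nu \<Rightarrow> nat \<Rightarrow>
   (nat \<Rightarrow> real^'nx^'nu) \<Rightarrow> (nat \<Rightarrow> 'w \<Rightarrow> real^'nx) \<Rightarrow> nat \<Rightarrow> 'w \<Rightarrow> real" where
  "grad_frob c A B K H M w t \<omega> =
     sqrt (\<Sum>i<H. \<Sum>a\<in>(UNIV::'nu set). \<Sum>b\<in>(UNIV::'nx set).
        (deriv (\<lambda>s. fcost c A B K H (M(i := M i + s *\<^sub>R munit a b)) w t \<omega>) 0)^2)"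

definition assm_A1 :: "(nat \<Rightarrow> real^'nx \<Rightarrow> real^'nu \<Rightarrow> real) \<Rightarrow> real \<Rightarrow> bool" where
  "assm_A1 c Gc \<longleftrightarrow> Gc \<ge> 1 \<and>
     (\<forall>t. convex_on UNIV (\<lambda>p. c t (fst p) (snd p)) \<and>
       (\<forall>x u. \<exists>gx gu. ((\<lambda>p. c t (fst p) (snd p)) has_derivative (\<lambda>h. gx \<bullet> fst h + gu \<bullet> snd h)) (at (x, u))
               \<and> norm gx \<le> Gc * norm x \<and> norm gu \<le> Gc * norm u))"

definition (in prob_space) assm_A2ii :: "(nat \<Rightarrow> 'a \<Rightarrow> real^'nx) \<Rightarrow> real \<Rightarrow> bool" where
  "assm_A2ii w \<sigma> \<longleftrightarrow> (\<forall>t. random_variable borel (w t) \<and>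
      integrable M (\<lambda>\<omega>. norm (w t \<omega>) ^ 4) \<and> expectation (\<lambda>\<omega>. norm (w t \<omega>) ^ 4) \<le> \<sigma> ^ 4)"

definition Mset :: "nat \<Rightarrow> real \<Rightarrow> real \<Rightarrow> real \<Rightarrow> (nat \<Rightarrow> real^'nx^'nu) set" where
  "Mset H \<kappa>B \<kappa> \<gamma> = {M. \<forall>i<H. opnorm (M i) \<le> 2 * \<kappa>B * \<kappa>^3 * (1 - \<gamma>)^i}"

end

theory Submission
  imports Defs
begin

lemma opnorm_bl: "bounded_linear (\<lambda>x. (X::'a::{real_normed_field,euclidean_space}^'n^'m) *v x)"
  by (rule matrix_vector_mul_bounded_linear)

lemma opnorm_apply: "norm ((X::'a::{real_normed_field,euclidean_space}^'n^'m) *v x) \<le> opnorm X * norm x"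
  unfolding opnorm_def by (rule onorm[OF opnorm_bl])

lemma opnorm_nonneg: "0 \<le> opnorm (X::'a::{real_normed_field,euclidean_space}^'n^'m)"
  unfolding opnorm_def by (rule onorm_pos_le[OF opnorm_bl])

lemma opnorm_leI: "(\<And>x. norm ((X::'a::{real_normed_field,euclidean_space}^'n^'m) *v x) \<le> b * norm x) \<Longrightarrow> opnorm X \<le> b"
  unfolding opnorm_def by (rule onorm_le) auto

lemma opnorm_mult: "opnorm ((X::'a::{real_normed_field,euclidean_space}^'n^'m) ** Y) \<le> opnorm X * opnorm Y"
proof (rule opnorm_leI)
  fix x
  have "norm ((X ** Y) *v x) = norm (X *v (Y *v x))" by (simp add: matrix_vector_mul_assoc)
  also have "\<dots> \<le> opnorm X * norm (Y *v x)" by (rule opnorm_apply)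
  also have "\<dots> \<le> opnorm X * (opnorm Y * norm x)" by (rule mult_left_mono[OF opnorm_apply opnorm_nonneg])
  finally show "norm ((X ** Y) *v x) \<le> opnorm X * opnorm Y * norm x" by (simp add: mult.assoc)
qed

lemma opnorm_id_le: "opnorm (mat 1 :: 'a::{real_normed_field,euclidean_space}^'n^'n) \<le> 1"
  by (rule opnorm_leI) simp

lemma opnorm_id_ge: "1 \<le> opnorm (mat 1 :: 'a::{real_normed_field,euclidean_space}^'n^'n)"
proof -
  obtain i :: 'n where True by auto
  have "norm (mat 1 *v axis i (1::'a)) \<le> opnorm (mat 1 :: 'a^'n^'n) * norm (axis i (1::'a))"
    by (rule opnorm_apply)
  moreover have "norm (axis i (1::'a)) = 1"
    unfolding norm_vec_def L2_set_def axis_def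
    by (simp add: if_distrib if_distribR cong: if_cong)
  ultimately show ?thesis by simp
qed

lemma matpow_opnorm: "opnorm (matpow (X::'a::{real_normed_field,euclidean_space}^'n^'n) j) \<le> opnorm X ^ j"
proof (induction j)
  case 0 then show ?case using opnorm_id_le by simp
next
  case (Suc j)
  have "opnorm (matpow X (Suc j)) \<le> opnorm X * opnorm (matpow X j)" by (simp add: opnorm_mult)
  also have "\<dots> \<le> opnorm X * opnorm X ^ j" by (rule mult_left_mono[OF Suc opnorm_nonneg])
  finally show ?case by simp
qed

definition cpx :: "real^'n^'m \<Rightarrow> complex^'n^'m" where "cpx X = map_matrix complex_of_real X"

lemma cpx_mult: "cpx (X ** Y) = cpx X ** cpx Y"
  unfolding cpx_def by (simp add: vec_eq_iff matrix_matrix_mult_def)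

lemma cpx_one: "cpx (mat 1) = mat 1"
  unfolding cpx_def by (simp add: vec_eq_iff mat_def)

lemma opnorm_cpx: "opnorm (X::real^'n^'m) \<le> opnorm (cpx X)"
proof (rule opnorm_leI)
  fix x :: "real^'n"
  define xc where "xc = (\<chi> i. complex_of_real (x$i))"
  have 1: "cpx X *v xc = (\<chi> i. complex_of_real ((X *v x)$i))"
    by (simp add: cpx_def xc_def vec_eq_iff matrix_vector_mult_def)
  have n: "norm (\<chi> i. complex_of_real (v$i)) = norm v" for v :: "real^'k"
    by (simp add: norm_vec_def)
  have "norm (X *v x) = norm (cpx X *v xc)" by (simp add: 1 n)
  also have "\<dots> \<le> opnorm (cpx X) * norm xc" by (rule opnorm_apply)
  finally show "norm (X *v x) \<le> opnorm (cpx X) * norm x" by (simp add: xc_def n)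
qed

lemma ss_facts:
  fixes A :: "real^'nx^'nx" and B :: "real^'nu^'nx" and K :: "real^'nx^'nu"
  assumes ss: "strongly_stable A B K \<kappa> \<gamma>" and g: "\<gamma> < 1"
  shows "1 \<le> \<kappa>" "opnorm K \<le> \<kappa>" "\<And>j. opnorm (matpow (A - B ** K) j) \<le> \<kappa>^2 * (1-\<gamma>)^j"
proof -
  obtain P Q :: "complex^'nx^'nx" where inv: "invertible Q" and
    eq: "cpx (A - B ** K) = Q ** P ** matrix_inv Q" and
    nP: "opnorm P \<le> 1 - \<gamma>" and nK: "opnorm K \<le> \<kappa>" and nQ: "opnorm Q \<le> \<kappa>"
    and nQi: "opnorm (matrix_inv Q) \<le> \<kappa>"
    using ss unfolding strongly_stable_def cpx_def by blast
  define Qi where "Qi = matrix_inv Q"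
  have QQi: "Q ** Qi = mat 1" "Qi ** Q = mat 1"
    using inv unfolding invertible_def Qi_def matrix_inv_def
    by (metis (mono_tags, lifting) someI_ex)+
  show "opnorm K \<le> \<kappa>" by fact
  have "1 \<le> opnorm (mat 1 :: complex^'nx^'nx)" by (rule opnorm_id_ge)
  also have "\<dots> \<le> opnorm Q * opnorm Qi" unfolding QQi(1)[symmetric] by (rule opnorm_mult)
  also have "\<dots> \<le> \<kappa> * \<kappa>" using nQ nQi Qi_def
    by (intro mult_mono) (auto simp: opnorm_nonneg intro: order_trans[OF opnorm_nonneg])
  finally have kk: "1 \<le> \<kappa> * \<kappa>" .
  have k0: "0 \<le> \<kappa>" using nQ opnorm_nonneg order_trans by blast
  show "1 \<le> \<kappa>"
  proof (rule ccontr)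
    assume "\<not> 1 \<le> \<kappa>"
    then have "\<kappa> * \<kappa> < 1 * 1" using k0 by (intro mult_strict_mono') auto
    then show False using kk by simp
  qed
  fix j
  have pw: "cpx (matpow (A - B ** K) j) = Q ** matpow P j ** Qi"
  proof (induction j)
    case 0 then show ?case by (simp add: cpx_one QQi)
  next
    case (Suc j)
    have "cpx (matpow (A - B ** K) (Suc j)) = (Q ** P ** Qi) ** (Q ** matpow P j ** Qi)"
      by (simp add: cpx_mult Suc eq Qi_def)
    also have "\<dots> = Q ** P ** (Qi ** Q) ** matpow P j ** Qi" by (simp add: matrix_mul_assoc)
    also have "\<dots> = Q ** matpow P (Suc j) ** Qi" by (simp add: QQi matrix_mul_assoc)
    finally show ?case .
  qed
  have "opnorm (matpow (A - B ** K) j) \<le> opnorm (Q ** matpow P j ** Qi)"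
    using opnorm_cpx pw by metis
  also have "\<dots> \<le> opnorm Q * opnorm (matpow P j) * opnorm Qi"
    by (meson opnorm_mult opnorm_nonneg mult_right_mono order_trans)
  also have "\<dots> \<le> \<kappa> * (1-\<gamma>)^j * \<kappa>"
  proof (intro mult_mono)
    show "opnorm (matpow P j) \<le> (1 - \<gamma>) ^ j"
      using matpow_opnorm[of P j] power_mono[OF nP opnorm_nonneg, of j] by linarith
  qed (use nQ nQi Qi_def k0 g opnorm_nonneg in auto)
  finally show "opnorm (matpow (A - B ** K) j) \<le> \<kappa>^2 * (1-\<gamma>)^j" by (simp add: power2_eq_square mult_ac)
qed

lemma sum_mv: "(\<Sum>j\<in>S. X j) *v (x::'a::semiring_1^'n) = (\<Sum>j\<in>S. X j *v x)"
  by (induction S rule: infinite_finite_induct) (auto simp: matrix_vector_mult_add_rdistrib)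

lemma scaleR_mv: "(s *\<^sub>R X) *v (x::real^'n) = s *\<^sub>R (X *v x)"
  by (simp add: vec_eq_iff matrix_vector_mult_def sum_distrib_left mult_ac)

definition DP :: "real^'nx^'nx \<Rightarrow> real^'nu^'nx \<Rightarrow> real^'nx^'nu \<Rightarrow> nat \<Rightarrow> nat \<Rightarrow> nat \<Rightarrow> real^'nx^'nu \<Rightarrow> nat \<Rightarrow> real^'nx^'nx" where
  "DP A B K H h i E l = (\<Sum>j\<in>{0..h}. if 1 \<le> int l - int j \<and> int l - int j \<le> int H \<and> l - j - 1 = i
       then matpow (A - B ** K) j ** B ** E else 0)"

lemma Psi_pert:
  "Psi A B K H h (\<lambda>_. M(i := M i + s *\<^sub>R E)) \<tau> l = Psi A B K H h (\<lambda>_. M) \<tau> l + s *\<^sub>R DP A B K H h i E l"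
proof -
  have "(\<Sum>j\<in>{0..h}. if 1 \<le> int l - int j \<and> int l - int j \<le> int H
          then matpow (A - B ** K) j ** B ** (M(i := M i + s *\<^sub>R E)) (l - j - 1) else 0)
      = (\<Sum>j\<in>{0..h}. (if 1 \<le> int l - int j \<and> int l - int j \<le> int H
          then matpow (A - B ** K) j ** B ** M (l - j - 1) else 0)
          + s *\<^sub>R (if 1 \<le> int l - int j \<and> int l - int j \<le> int H \<and> l - j - 1 = i
       then matpow (A - B ** K) j ** B ** E else 0))"
    by (rule sum.cong) (auto simp: matrix_add_ldistrib matrix_scalar_ac scalar_matrix_assoc)
  then show ?thesis
    unfolding Psi_def DP_def by (simp add: sum.distrib scaleR_sum_right add.assoc)
qed

definition dY where
  "dY A B K H i E w t \<omega> = (\<Sum>l\<in>{0..2*H}. DP A B K H H i E l *v wext w (int t - 1 - int l) \<omega>)"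

definition dV where
  "dV A B K H i E w t \<omega> = - (K *v dY A B K H i E w t \<omega>) + E *v wext w (int t - int (Suc i)) \<omega>"

lemma ystate_pert:
  "ystate A B K H (\<lambda>_. M(i := M i + s *\<^sub>R E)) w t \<omega> = ystate A B K H (\<lambda>_. M) w t \<omega> + s *\<^sub>R dY A B K H i E w t \<omega>"
  unfolding ystate_def dY_def Psi_pert
  by (simp add: matrix_vector_mult_add_rdistrib scaleR_mv sum.distrib scaleR_sum_right)

lemma vinput_pert:
  assumes "i < H"
  shows "vinput A B K H (\<lambda>_. M(i := M i + s *\<^sub>R E)) w t \<omega> = vinput A B K H (\<lambda>_. M) w t \<omega> + s *\<^sub>R dV A B K H i E w t \<omega>"
proof -
  have "(\<Sum>i'\<in>{1..H}. (M(i := M i + s *\<^sub>R E)) (i' - 1) *v wext w (int t - int i') \<omega>)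
     = (\<Sum>i'\<in>{1..H}. M (i' - 1) *v wext w (int t - int i') \<omega>
        + s *\<^sub>R (if i' = Suc i then E *v wext w (int t - int i') \<omega> else 0))"
    by (rule sum.cong) (auto simp: matrix_vector_mult_add_rdistrib scaleR_mv)
  also have "\<dots> = (\<Sum>i'\<in>{1..H}. M (i' - 1) *v wext w (int t - int i') \<omega>)
        + s *\<^sub>R (E *v wext w (int t - int (Suc i)) \<omega>)"
    using assms by (simp add: sum.distrib scaleR_sum_right[symmetric] sum.delta')
  finally show ?thesis
    unfolding vinput_def dV_def ystate_pert
    by (simp add: matrix_vector_right_distrib matrix_vector_mult_scaleR algebra_simps)
qed

lemma fcost_pert:
  assumes "i < H"
  shows "fcost c A B K H (M(i := M i + s *\<^sub>R E)) w t \<omega> =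
     c t (ystate A B K H (\<lambda>_. M) w t \<omega> + s *\<^sub>R dY A B K H i E w t \<omega>)
         (vinput A B K H (\<lambda>_. M) w t \<omega> + s *\<^sub>R dV A B K H i E w t \<omega>)"
  unfolding fcost_def Fcost_def ystate_pert vinput_pert[OF assms] ..

lemma fcost_deriv:
  assumes "i < H"
  and hd: "((\<lambda>p. c t (fst p) (snd p)) has_derivative (\<lambda>h. gx \<bullet> fst h + gu \<bullet> snd h))
      (at (ystate A B K H (\<lambda>_. M) w t \<omega>, vinput A B K H (\<lambda>_. M) w t \<omega>))"
  shows "((\<lambda>s. fcost c A B K H (M(i := M i + s *\<^sub>R E)) w t \<omega>) has_real_derivative
      (gx \<bullet> dY A B K H i E w t \<omega> + gu \<bullet> dV A B K H i E w t \<omega>)) (at 0)"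
proof -
  define y0 where "y0 = ystate A B K H (\<lambda>_. M) w t \<omega>"
  define v0 where "v0 = vinput A B K H (\<lambda>_. M) w t \<omega>"
  define dy where "dy = dY A B K H i E w t \<omega>"
  define dv where "dv = dV A B K H i E w t \<omega>"
  have phi: "((\<lambda>s::real. (y0 + s *\<^sub>R dy, v0 + s *\<^sub>R dv)) has_derivative (\<lambda>h. (h *\<^sub>R dy, h *\<^sub>R dv))) (at 0)"
    by (auto intro!: derivative_eq_intros)
  have hd': "((\<lambda>p. c t (fst p) (snd p)) has_derivative (\<lambda>h. gx \<bullet> fst h + gu \<bullet> snd h))
      (at (y0 + 0 *\<^sub>R dy, v0 + 0 *\<^sub>R dv))" using hd by (simp add: y0_def v0_def)
  have "((\<lambda>s. c t (y0 + s *\<^sub>R dy) (v0 + s *\<^sub>R dv)) has_derivative (\<lambda>h. (gx \<bullet> dy + gu \<bullet> dv) * h)) (at 0)"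
  proof -
    have "((\<lambda>s. c t (y0 + s *\<^sub>R dy) (v0 + s *\<^sub>R dv)) has_derivative (\<lambda>x. gx \<bullet> (x *\<^sub>R dy) + gu \<bullet> (x *\<^sub>R dv))) (at 0)"
      using has_derivative_compose[OF phi hd'] by simp
    then show ?thesis by (rule has_derivative_eq_rhs) (auto simp: algebra_simps fun_eq_iff)
  qed
  then show ?thesis
    unfolding has_field_derivative_def fcost_pert[OF assms(1)] y0_def v0_def dy_def dv_def .
qed

definition rvec :: "real^'nx \<Rightarrow> real^'nu \<Rightarrow> real^'nx^'nx \<Rightarrow> real^'nu^'nx \<Rightarrow> real^'nx^'nu \<Rightarrow> nat \<Rightarrow> real^'nu" where
  "rvec gx gu A B K j = gx v* (matpow (A - B ** K) j ** B) - gu v* (K ** (matpow (A - B ** K) j ** B))"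

abbreviation cnd :: "nat \<Rightarrow> nat \<Rightarrow> nat \<Rightarrow> nat \<Rightarrow> bool" where
  "cnd H l j i \<equiv> 1 \<le> int l - int j \<and> int l - int j \<le> int H \<and> l - j - 1 = i"

lemma mv_sum: "X *v (\<Sum>j\<in>S. f j) = (\<Sum>j\<in>S. X *v (f j :: 'a::comm_ring_1^'n))"
  by (induction S rule: infinite_finite_induct) (auto simp: matrix_vector_right_distrib)

lemma if_mv: "(if P then X else 0) *v x = (if P then X *v x else 0)" by simp

lemma rvec_inner: "rvec gx gu A B K j \<bullet> u = gx \<bullet> ((matpow (A - B ** K) j ** B) *v u) - gu \<bullet> (K *v ((matpow (A - B ** K) j ** B) *v u))"
  unfolding rvec_def by (simp add: inner_diff_left dot_lmul_matrix matrix_vector_mul_assoc)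

lemma D_formula:
  "gx \<bullet> dY A B K H i E w t \<omega> + gu \<bullet> dV A B K H i E w t \<omega> =
   (\<Sum>l\<in>{0..2*H}. \<Sum>j\<in>{0..H}. if cnd H l j i then rvec gx gu A B K j \<bullet> (E *v wext w (int t - 1 - int l) \<omega>) else 0)
   + gu \<bullet> (E *v wext w (int t - int (Suc i)) \<omega>)"
proof -
  have dy: "dY A B K H i E w t \<omega> = (\<Sum>l\<in>{0..2*H}. \<Sum>j\<in>{0..H}. if cnd H l j i then (matpow (A - B ** K) j ** B) *v (E *v wext w (int t - 1 - int l) \<omega>) else 0)"
    unfolding dY_def DP_def sum_mv if_mv by (simp add: matrix_vector_mul_assoc cong: if_cong)
  show ?thesis
    unfolding dV_def dy
    by (simp add: inner_sum_right inner_add_right mv_sum if_distrib rvec_inner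
         sum_subtractf[symmetric] inner_diff_right cong: if_cong)
qed

definition outer :: "real^'a \<Rightarrow> real^'b \<Rightarrow> real^'b^'a" where
  "outer p z = (\<chi> a b. p$a * z$b)"

lemma nsq: "norm (x::'a::real_normed_vector^'n)^2 = (\<Sum>i\<in>UNIV. norm (x$i)^2)"
  unfolding norm_vec_def L2_set_def by (simp add: sum_nonneg)

lemma norm_outer: "norm (outer p z) = norm p * norm z"
proof -
  have "outer p z $ a = p$a *\<^sub>R z" for a by (simp add: outer_def vec_eq_iff)
  then have "norm (outer p z) = L2_set (\<lambda>a. \<bar>p$a\<bar> * norm z) UNIV"
    unfolding norm_vec_def[of "outer p z"] by simp
  also have "\<dots> = L2_set (\<lambda>a. \<bar>p$a\<bar>) UNIV * norm z"
    by (simp add: L2_set_left_distrib)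
  also have "\<dots> = norm p * norm z" by (simp add: norm_vec_def)
  finally show ?thesis .
qed

lemma munit_mv: "munit a b *v x = (\<chi> i. if i = a then x$b else 0)"
proof -
  have "(\<Sum>j\<in>UNIV. (if i = a \<and> j = b then 1 else 0) * x$j) = (if i = a then x$b else 0)" for i
    by (cases "i = a") (auto simp: if_distrib if_distribR cong: if_cong)
  then show ?thesis by (simp add: munit_def matrix_vector_mult_def vec_eq_iff)
qed

lemma if_vec: "(if P then X else 0) $ i = (if P then X $ i else 0)" by simp

lemma munit_inner: "r \<bullet> (munit a b *v x) = r$a * x$b"
  unfolding munit_mv inner_vec_def by (simp add: if_distrib if_distribR cong: if_cong)

lemma frob_bound:
  fixes r :: "nat \<Rightarrow> real^'nu" and x :: "nat \<Rightarrow> real^'nx" and gu :: "real^'nu"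
  shows "(\<Sum>a\<in>(UNIV::'nu set). \<Sum>b\<in>(UNIV::'nx set).
     ((\<Sum>l\<in>L. \<Sum>j\<in>J. if P l j then r j \<bullet> (munit a b *v x l) else 0) + gu \<bullet> (munit a b *v x'))^2)
   \<le> ((\<Sum>l\<in>L. \<Sum>j\<in>J. if P l j then norm (r j) * norm (x l) else 0) + norm gu * norm x')^2"
proof -
  define G where "G = (\<Sum>l\<in>L. \<Sum>j\<in>J. if P l j then outer (r j) (x l) else 0) + outer gu x'"
  have Gc: "G $ a $ b = (\<Sum>l\<in>L. \<Sum>j\<in>J. if P l j then r j \<bullet> (munit a b *v x l) else 0) + gu \<bullet> (munit a b *v x')" for a b
    unfolding G_def munit_inner by (simp add: outer_def if_vec cong: if_cong)
  have "(\<Sum>a\<in>(UNIV::'nu set). \<Sum>b\<in>(UNIV::'nx set). (G$a$b)^2) = norm G ^2"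
    by (simp add: nsq)
  also have "norm G \<le> (\<Sum>l\<in>L. \<Sum>j\<in>J. if P l j then norm (r j) * norm (x l) else 0) + norm gu * norm x'"
  proof -
    have "norm G \<le> norm (\<Sum>l\<in>L. \<Sum>j\<in>J. if P l j then outer (r j) (x l) else 0) + norm (outer gu x')"
      unfolding G_def by (rule norm_triangle_ineq)
    also have "norm (\<Sum>l\<in>L. \<Sum>j\<in>J. if P l j then outer (r j) (x l) else 0) \<le> (\<Sum>l\<in>L. \<Sum>j\<in>J. norm (if P l j then outer (r j) (x l) else 0))"
      by (rule order_trans[OF norm_sum]) (intro sum_mono norm_sum)
    finally show ?thesis by (simp add: norm_outer if_distrib cong: if_cong)
  qed
  then have "norm G ^ 2 \<le> ((\<Sum>l\<in>L. \<Sum>j\<in>J. if P l j then norm (r j) * norm (x l) else 0) + norm gu * norm x')^2"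
    by (rule power_mono) simp
  finally show ?thesis unfolding Gc .
qed

lemma opnorm_add: "opnorm ((X::real^'n^'m) + Y) \<le> opnorm X + opnorm Y"
proof (rule opnorm_leI)
  fix x
  have "norm ((X + Y) *v x) \<le> norm (X *v x) + norm (Y *v x)"
    by (simp add: matrix_vector_mult_add_rdistrib norm_triangle_ineq)
  also have "\<dots> \<le> opnorm X * norm x + opnorm Y * norm x" by (intro add_mono opnorm_apply)
  finally show "norm ((X + Y) *v x) \<le> (opnorm X + opnorm Y) * norm x" by (simp add: algebra_simps)
qed

lemma opnorm_zero: "opnorm (0::real^'n^'m) = 0"
proof -
  have "opnorm (0::real^'n^'m) \<le> 0" by (rule opnorm_leI) simp
  then show ?thesis using opnorm_nonneg[of "0::real^'n^'m"] by linarith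
qed

lemma opnorm_sum: "opnorm (\<Sum>j\<in>S. (X j::real^'n^'m)) \<le> (\<Sum>j\<in>S. opnorm (X j))"
  by (induction S rule: infinite_finite_induct) (auto simp: opnorm_zero intro: order_trans[OF opnorm_add])

lemma opnorm_if: "opnorm (if P then (X::real^'n^'m) else 0) = (if P then opnorm X else 0)"
  by (simp add: opnorm_zero)

definition psi :: "real \<Rightarrow> real \<Rightarrow> real \<Rightarrow> nat \<Rightarrow> nat \<Rightarrow> real" where
  "psi \<kappa> \<rho> \<kappa>B H l = (if l \<le> H then \<kappa>^2 * \<rho>^l else 0) +
     (\<Sum>j\<in>{0..H}. if 1 \<le> int l - int j \<and> int l - int j \<le> int H then \<kappa>^2 * \<rho>^j * \<kappa>B * (2 * \<kappa>B * \<kappa>^3 * \<rho>^(l - j - 1)) else 0)"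

definition mu :: "real \<Rightarrow> real \<Rightarrow> real \<Rightarrow> nat \<Rightarrow> nat \<Rightarrow> real" where
  "mu \<kappa> \<rho> \<kappa>B H l = (if l < H then 2 * \<kappa>B * \<kappa>^3 * \<rho>^l else 0)"

definition alpha :: "real \<Rightarrow> real \<Rightarrow> real \<Rightarrow> nat \<Rightarrow> nat \<Rightarrow> real" where
  "alpha \<kappa> \<rho> \<kappa>B H l = (1 + \<kappa>^2) * psi \<kappa> \<rho> \<kappa>B H l + \<kappa> * mu \<kappa> \<rho> \<kappa>B H l"

definition beta :: "real \<Rightarrow> real \<Rightarrow> real \<Rightarrow> nat \<Rightarrow> nat \<Rightarrow> nat \<Rightarrow> real" where
  "beta \<kappa> \<rho> \<kappa>B H i l = (\<Sum>j\<in>{0..H}. if cnd H l j i then \<kappa>^2 * \<rho>^j * \<kappa>B else 0) + (if l = i then 1 else 0)"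

definition uu :: "(nat \<Rightarrow> 'w \<Rightarrow> real^'nx) \<Rightarrow> nat \<Rightarrow> 'w \<Rightarrow> nat \<Rightarrow> real" where
  "uu w t \<omega> l = norm (wext w (int t - 1 - int l) \<omega>)"

lemma rvec_norm:
  "norm (rvec gx gu A B K j) \<le> (norm gx + opnorm K * norm gu) * opnorm (matpow (A - B ** K) j ** B)"
proof -
  define r where "r = rvec gx gu A B K j"
  define Y where "Y = matpow (A - B ** K) j ** B"
  define cc where "cc = (norm gx + opnorm K * norm gu) * opnorm Y"
  have cc0: "0 \<le> cc" unfolding cc_def by (intro mult_nonneg_nonneg add_nonneg_nonneg opnorm_nonneg) auto
  have "norm r ^ 2 = r \<bullet> r" by (simp add: power2_norm_eq_inner)
  also have "\<dots> = gx \<bullet> (Y *v r) - gu \<bullet> (K *v (Y *v r))" unfolding r_def Y_def rvec_inner ..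
  also have "\<dots> \<le> norm gx * norm (Y *v r) + norm gu * norm (K *v (Y *v r))"
    by (smt (verit) Cauchy_Schwarz_ineq2 abs_le_D1 norm_cauchy_schwarz)
  also have "\<dots> \<le> norm gx * norm (Y *v r) + norm gu * (opnorm K * norm (Y *v r))"
    by (intro add_left_mono mult_left_mono opnorm_apply) auto
  also have "\<dots> = (norm gx + opnorm K * norm gu) * norm (Y *v r)" by (simp add: algebra_simps)
  also have "\<dots> \<le> (norm gx + opnorm K * norm gu) * (opnorm Y * norm r)"
    by (intro mult_left_mono opnorm_apply add_nonneg_nonneg mult_nonneg_nonneg opnorm_nonneg) auto
  finally have "norm r ^ 2 \<le> cc * norm r" by (simp add: cc_def mult_ac)
  then have "norm r \<le> cc"
    by (cases "norm r = 0") (use cc0 in \<open>auto simp: power2_eq_square\<close>)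
  then show ?thesis unfolding r_def cc_def Y_def .
qed

context
  fixes A :: "real^'nx^'nx" and B :: "real^'nu^'nx" and K :: "real^'nx^'nu"
    and M :: "nat \<Rightarrow> real^'nx^'nu" and H :: nat and \<kappa> \<rho> \<kappa>B :: real
  assumes Kn: "opnorm K \<le> \<kappa>" and k1: "1 \<le> \<kappa>"
    and AKp: "\<And>j. opnorm (matpow (A - B ** K) j) \<le> \<kappa>^2 * \<rho>^j"
    and Bn: "opnorm B \<le> \<kappa>B" and Mb: "\<And>m. m < H \<Longrightarrow> opnorm (M m) \<le> 2 * \<kappa>B * \<kappa>^3 * \<rho>^m"
    and rho: "0 \<le> \<rho>"
begin

lemma kB0: "0 \<le> \<kappa>B" using Bn opnorm_nonneg order_trans by blast

lemma Y_bound: "opnorm (matpow (A - B ** K) j ** B) \<le> \<kappa>^2 * \<rho>^j * \<kappa>B"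
  using opnorm_mult[of "matpow (A - B ** K) j" B] AKp[of j] Bn
  by (smt (verit, best) mult_mono opnorm_nonneg)

lemma Psi_bound: "opnorm (Psi A B K H H (\<lambda>_. M) \<tau> l) \<le> psi \<kappa> \<rho> \<kappa>B H l"
proof -
  have t1: "opnorm (if l \<le> H then matpow (A - B ** K) l else 0) \<le> (if l \<le> H then \<kappa>^2 * \<rho>^l else 0)"
    using AKp by (simp add: opnorm_zero)
  have t2: "opnorm (if 1 \<le> int l - int j \<and> int l - int j \<le> int H then matpow (A - B ** K) j ** B ** M (l - j - 1) else 0)
     \<le> (if 1 \<le> int l - int j \<and> int l - int j \<le> int H then \<kappa>^2 * \<rho>^j * \<kappa>B * (2 * \<kappa>B * \<kappa>^3 * \<rho>^(l - j - 1)) else 0)" for j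
  proof (cases "1 \<le> int l - int j \<and> int l - int j \<le> int H")
    case True
    then have "l - j - 1 < H" by linarith
    then have "opnorm (M (l - j - 1)) \<le> 2 * \<kappa>B * \<kappa>^3 * \<rho>^(l - j - 1)" by (rule Mb)
    moreover have "opnorm (matpow (A - B ** K) j ** B ** M (l - j - 1)) \<le> opnorm (matpow (A - B ** K) j ** B) * opnorm (M (l - j - 1))"
      by (rule opnorm_mult)
    ultimately show ?thesis using True Y_bound[of j]
      by (smt (verit, best) mult_mono opnorm_nonneg)
  next
    case False
    have "opnorm (0::real^'nx^'nx) = 0" by (rule opnorm_zero)
    then show ?thesis using False by (simp only: if_False if_not_P[OF False] order_refl)
  qed
  show ?thesis unfolding Psi_def psi_def
    by (rule order_trans[OF opnorm_add], rule add_mono[OF t1], rule order_trans[OF opnorm_sum], rule sum_mono, rule t2)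
qed

lemma psi_nonneg: "0 \<le> psi \<kappa> \<rho> \<kappa>B H l"
  unfolding psi_def using rho kB0 k1 by (intro add_nonneg_nonneg sum_nonneg) (auto intro!: mult_nonneg_nonneg)

lemma y_bound: "norm (ystate A B K H (\<lambda>_. M) w t \<omega>) \<le> (\<Sum>l\<in>{0..2*H}. psi \<kappa> \<rho> \<kappa>B H l * uu w t \<omega> l)"
  unfolding ystate_def uu_def
  by (rule order_trans[OF norm_sum], rule sum_mono, rule order_trans[OF opnorm_apply],
      rule mult_right_mono[OF Psi_bound], simp)

lemma v_bound: "norm (vinput A B K H (\<lambda>_. M) w t \<omega>) \<le> \<kappa> * norm (ystate A B K H (\<lambda>_. M) w t \<omega>)
     + (\<Sum>l\<in>{0..2*H}. mu \<kappa> \<rho> \<kappa>B H l * uu w t \<omega> l)"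
proof -
  have s1: "norm (\<Sum>i\<in>{1..H}. M (i - 1) *v wext w (int t - int i) \<omega>) \<le> (\<Sum>i\<in>{1..H}. 2 * \<kappa>B * \<kappa>^3 * \<rho>^(i-1) * uu w t \<omega> (i - 1))"
  proof (rule order_trans[OF norm_sum], rule sum_mono)
    fix i assume i: "i \<in> {1..H}"
    then have e: "int t - int i = int t - 1 - int (i - 1)" by auto
    have "norm (M (i - 1) *v wext w (int t - int i) \<omega>) \<le> opnorm (M (i - 1)) * uu w t \<omega> (i - 1)"
      unfolding uu_def e by (rule opnorm_apply)
    also have "\<dots> \<le> 2 * \<kappa>B * \<kappa>^3 * \<rho>^(i-1) * uu w t \<omega> (i - 1)"
      using i by (intro mult_right_mono Mb) (auto simp: uu_def)
    finally show "norm (M (i - 1) *v wext w (int t - int i) \<omega>) \<le> 2 * \<kappa>B * \<kappa>^3 * \<rho>^(i-1) * uu w t \<omega> (i - 1)" .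
  qed
  have s2: "(\<Sum>i\<in>{1..H}. 2 * \<kappa>B * \<kappa>^3 * \<rho>^(i-1) * uu w t \<omega> (i - 1)) = (\<Sum>l\<in>{0..2*H}. mu \<kappa> \<rho> \<kappa>B H l * uu w t \<omega> l)"
  proof -
    have ieq: "{0..2*H} \<inter> {..<H} = {..<H}" by auto
    have "(\<Sum>i\<in>{1..H}. 2 * \<kappa>B * \<kappa>^3 * \<rho>^(i-1) * uu w t \<omega> (i - 1)) = (\<Sum>l<H. 2 * \<kappa>B * \<kappa>^3 * \<rho>^l * uu w t \<omega> l)"
      using sum.atLeast1_atMost_eq[of "\<lambda>i. 2 * \<kappa>B * \<kappa>^3 * \<rho>^(i-1) * uu w t \<omega> (i - 1)" H] by simp
    also have "\<dots> = (\<Sum>l\<in>{0..2*H} \<inter> {..<H}. 2 * \<kappa>B * \<kappa>^3 * \<rho>^l * uu w t \<omega> l)"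
      by (simp only: ieq)
    also have "\<dots> = (\<Sum>l\<in>{0..2*H}. if l \<in> {..<H} then 2 * \<kappa>B * \<kappa>^3 * \<rho>^l * uu w t \<omega> l else 0)"
      by (rule sum.inter_restrict) simp
    also have "\<dots> = (\<Sum>l\<in>{0..2*H}. mu \<kappa> \<rho> \<kappa>B H l * uu w t \<omega> l)"
      by (rule sum.cong) (auto simp: mu_def)
    finally show ?thesis .
  qed
  have "norm (vinput A B K H (\<lambda>_. M) w t \<omega>) \<le> norm (K *v ystate A B K H (\<lambda>_. M) w t \<omega>)
      + norm (\<Sum>i\<in>{1..H}. M (i - 1) *v wext w (int t - int i) \<omega>)"
    unfolding vinput_def by (rule order_trans[OF norm_triangle_ineq]) simp
  also have "\<dots> \<le> \<kappa> * norm (ystate A B K H (\<lambda>_. M) w t \<omega>) + (\<Sum>l\<in>{0..2*H}. mu \<kappa> \<rho> \<kappa>B H l * uu w t \<omega> l)"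
  proof (rule add_mono)
    show "norm (K *v ystate A B K H (\<lambda>_. M) w t \<omega>) \<le> \<kappa> * norm (ystate A B K H (\<lambda>_. M) w t \<omega>)"
      by (rule order_trans[OF opnorm_apply], rule mult_right_mono[OF Kn], simp)
  qed (use s1 s2 in simp)
  finally show ?thesis .
qed

lemma sq_sum_le: "(\<And>i. i \<in> S \<Longrightarrow> 0 \<le> f i) \<Longrightarrow> (\<Sum>i\<in>S. (f i)^2) \<le> (\<Sum>i\<in>S. f i :: real)^2"
proof (induction S rule: infinite_finite_induct)
  case (insert x F)
  have "0 \<le> sum f F" using insert by (intro sum_nonneg) auto
  moreover have "0 \<le> f x" using insert by auto
  ultimately have "(f x)^2 + (sum f F)^2 \<le> (f x + sum f F)^2" by (simp add: power2_sum)
  then show ?case using insert by simp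
qed auto

lemma X_bound:
  "norm (ystate A B K H (\<lambda>_. M) w t \<omega>) + \<kappa> * norm (vinput A B K H (\<lambda>_. M) w t \<omega>)
   \<le> (\<Sum>l\<in>{0..2*H}. alpha \<kappa> \<rho> \<kappa>B H l * uu w t \<omega> l)"
proof -
  define y where "y = norm (ystate A B K H (\<lambda>_. M) w t \<omega>)"
  define Sp where "Sp = (\<Sum>l\<in>{0..2*H}. psi \<kappa> \<rho> \<kappa>B H l * uu w t \<omega> l)"
  define Sm where "Sm = (\<Sum>l\<in>{0..2*H}. mu \<kappa> \<rho> \<kappa>B H l * uu w t \<omega> l)"
  have "y + \<kappa> * norm (vinput A B K H (\<lambda>_. M) w t \<omega>) \<le> y + \<kappa> * (\<kappa> * y + Sm)"
    using v_bound[where w=w and t=t and \<omega>=\<omega>] k1 unfolding y_def Sm_def by (intro add_left_mono mult_left_mono) auto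
  also have "\<dots> = (1 + \<kappa>^2) * y + \<kappa> * Sm" by (simp add: algebra_simps power2_eq_square)
  also have "\<dots> \<le> (1 + \<kappa>^2) * Sp + \<kappa> * Sm"
    using y_bound[where w=w and t=t and \<omega>=\<omega>] unfolding y_def Sp_def by (intro add_right_mono mult_left_mono) auto
  also have "\<dots> = (\<Sum>l\<in>{0..2*H}. alpha \<kappa> \<rho> \<kappa>B H l * uu w t \<omega> l)"
    unfolding Sp_def Sm_def alpha_def by (simp add: sum_distrib_left sum.distrib algebra_simps)
  finally show ?thesis unfolding y_def .
qed

lemma grad_pointwise:
  assumes A1: "assm_A1 c Gc"
  shows "(grad_frob c A B K H M w t \<omega>)^2 \<le> Gc^2 * (\<Sum>i<H. (\<Sum>l\<in>{0..2*H}. alpha \<kappa> \<rho> \<kappa>B H l * uu w t \<omega> l)^2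
              * (\<Sum>l\<in>{0..2*H}. beta \<kappa> \<rho> \<kappa>B H i l * uu w t \<omega> l)^2)"
    and "grad_frob c A B K H M w t \<omega> \<le> Gc * (\<Sum>i<H. (\<Sum>l\<in>{0..2*H}. alpha \<kappa> \<rho> \<kappa>B H l * uu w t \<omega> l)
              * (\<Sum>l\<in>{0..2*H}. beta \<kappa> \<rho> \<kappa>B H i l * uu w t \<omega> l))"
proof -
  define y0 where "y0 = ystate A B K H (\<lambda>_. M) w t \<omega>"
  define v0 where "v0 = vinput A B K H (\<lambda>_. M) w t \<omega>"
  have Gc1: "1 \<le> Gc" using A1 unfolding assm_A1_def by auto
  obtain gx gu where hd: "((\<lambda>p. c t (fst p) (snd p)) has_derivative (\<lambda>h. gx \<bullet> fst h + gu \<bullet> snd h)) (at (y0, v0))"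
    and ngx: "norm gx \<le> Gc * norm y0" and ngu: "norm gu \<le> Gc * norm v0"
    using A1 unfolding assm_A1_def by blast
  define X where "X = norm y0 + \<kappa> * norm v0"
  define Sa where "Sa = (\<Sum>l\<in>{0..2*H}. alpha \<kappa> \<rho> \<kappa>B H l * uu w t \<omega> l)"
  define Z where "Z i = (\<Sum>l\<in>{0..2*H}. beta \<kappa> \<rho> \<kappa>B H i l * uu w t \<omega> l)" for i
  have X0: "0 \<le> X" unfolding X_def using k1 by simp
  have XS: "X \<le> Sa" unfolding X_def Sa_def y0_def v0_def by (rule X_bound)
  have u0: "0 \<le> uu w t \<omega> l" for l by (simp add: uu_def)
  have Z0: "0 \<le> Z i" for i unfolding Z_def beta_def using u0 rho kB0 k1
    by (intro sum_nonneg mult_nonneg_nonneg add_nonneg_nonneg) auto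
  have Sa0: "0 \<le> Sa" using X0 XS by linarith
  have cK: "norm gx + opnorm K * norm gu \<le> Gc * X"
  proof -
    have "opnorm K * norm gu \<le> \<kappa> * (Gc * norm v0)"
      using Kn ngu k1 by (intro mult_mono) (auto simp: opnorm_nonneg)
    then show ?thesis using ngx unfolding X_def by (simp add: algebra_simps)
  qed
  have Si: "(\<Sum>a\<in>(UNIV::'nu set). \<Sum>b\<in>(UNIV::'nx set).
        (deriv (\<lambda>s. fcost c A B K H (M(i := M i + s *\<^sub>R munit a b)) w t \<omega>) 0)^2) \<le> (Gc * X * Z i)^2"
    if iH: "i < H" for i
  proof -
    have dv: "deriv (\<lambda>s. fcost c A B K H (M(i := M i + s *\<^sub>R munit a b)) w t \<omega>) 0 =
       (\<Sum>l\<in>{0..2*H}. \<Sum>j\<in>{0..H}. if cnd H l j i then rvec gx gu A B K j \<bullet> (munit a b *v wext w (int t - 1 - int l) \<omega>) else 0)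
       + gu \<bullet> (munit a b *v wext w (int t - int (Suc i)) \<omega>)" for a b
      unfolding D_formula[symmetric]
      by (rule DERIV_imp_deriv[OF fcost_deriv[where c=c and t=t and A=A and B=B and K=K and H=H and M=M and w=w and \<omega>=\<omega> and gx=gx and gu=gu and i=i and E="munit a b", OF iH hd[unfolded y0_def v0_def]]])
    have "(\<Sum>a\<in>(UNIV::'nu set). \<Sum>b\<in>(UNIV::'nx set).
        (deriv (\<lambda>s. fcost c A B K H (M(i := M i + s *\<^sub>R munit a b)) w t \<omega>) 0)^2)
      \<le> ((\<Sum>l\<in>{0..2*H}. \<Sum>j\<in>{0..H}. if cnd H l j i then norm (rvec gx gu A B K j) * norm (wext w (int t - 1 - int l) \<omega>) else 0)
          + norm gu * norm (wext w (int t - int (Suc i)) \<omega>))^2"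
      unfolding dv by (rule frob_bound)
    also have "\<dots> \<le> (Gc * X * Z i)^2"
    proof (rule power_mono)
      have e1: "(\<Sum>l\<in>{0..2*H}. \<Sum>j\<in>{0..H}. if cnd H l j i then norm (rvec gx gu A B K j) * norm (wext w (int t - 1 - int l) \<omega>) else 0)
         \<le> (\<Sum>l\<in>{0..2*H}. Gc * X * ((\<Sum>j\<in>{0..H}. if cnd H l j i then \<kappa>^2 * \<rho>^j * \<kappa>B else 0) * uu w t \<omega> l))"
        unfolding sum_distrib_right sum_distrib_left
      proof (intro sum_mono)
        fix l j
        have nr: "norm (rvec gx gu A B K j) \<le> Gc * X * (\<kappa>^2 * \<rho>^j * \<kappa>B)"
        proof (rule order_trans[OF rvec_norm], rule mult_mono[OF cK Y_bound])
          show "0 \<le> Gc * X" using Gc1 X0 by simp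
        qed (rule opnorm_nonneg)
        show "(if cnd H l j i then norm (rvec gx gu A B K j) * norm (wext w (int t - 1 - int l) \<omega>) else 0)
           \<le> Gc * X * ((if cnd H l j i then \<kappa>^2 * \<rho>^j * \<kappa>B else 0) * uu w t \<omega> l)"
          using mult_right_mono[OF nr norm_ge_zero[of "wext w (int t - 1 - int l) \<omega>"]]
          by (auto simp: uu_def mult_ac)
      qed
      have e2: "norm gu * norm (wext w (int t - int (Suc i)) \<omega>) \<le> Gc * X * (\<Sum>l\<in>{0..2*H}. (if l = i then 1 else 0) * uu w t \<omega> l)"
      proof -
        have "(\<Sum>l\<in>{0..2*H}. (if l = i then 1 else 0) * uu w t \<omega> l) = uu w t \<omega> i"
          using iH by (simp add: if_distrib if_distribR cong: if_cong)
        moreover have "uu w t \<omega> i = norm (wext w (int t - int (Suc i)) \<omega>)"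
          unfolding uu_def by (simp add: algebra_simps)
        moreover have "norm gu \<le> Gc * X"
        proof -
          have "norm v0 \<le> \<kappa> * norm v0" using k1 by (simp add: mult_right_mono[of 1 \<kappa>, simplified])
          then have "norm v0 \<le> X" unfolding X_def using norm_ge_zero[of y0] by linarith
          then show ?thesis using ngu Gc1 by (smt (verit) mult_left_mono)
        qed
        ultimately show ?thesis by (simp add: mult_right_mono)
      qed
      show "(\<Sum>l\<in>{0..2*H}. \<Sum>j\<in>{0..H}. if cnd H l j i then norm (rvec gx gu A B K j) * norm (wext w (int t - 1 - int l) \<omega>) else 0)
          + norm gu * norm (wext w (int t - int (Suc i)) \<omega>) \<le> Gc * X * Z i"
        using add_mono[OF e1 e2] unfolding Z_def beta_def
        by (simp add: sum_distrib_left sum.distrib algebra_simps)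
    qed (intro add_nonneg_nonneg sum_nonneg mult_nonneg_nonneg; auto)
    finally show ?thesis .
  qed
  define S where "S i = (\<Sum>a\<in>(UNIV::'nu set). \<Sum>b\<in>(UNIV::'nx set).
        (deriv (\<lambda>s. fcost c A B K H (M(i := M i + s *\<^sub>R munit a b)) w t \<omega>) 0)^2)" for i
  have S0: "0 \<le> S i" for i unfolding S_def by (intro sum_nonneg) auto
  have gf: "grad_frob c A B K H M w t \<omega> = sqrt (\<Sum>i<H. S i)" unfolding grad_frob_def S_def ..
  have sq: "(grad_frob c A B K H M w t \<omega>)^2 = (\<Sum>i<H. S i)" unfolding gf using S0 by (simp add: sum_nonneg)
  have "(\<Sum>i<H. S i) \<le> (\<Sum>i<H. (Gc * X * Z i)^2)" using Si unfolding S_def by (intro sum_mono) auto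
  also have "\<dots> \<le> (\<Sum>i<H. Gc^2 * (Sa^2 * (Z i)^2))"
  proof (intro sum_mono)
    fix i
    have "X^2 \<le> Sa^2" using X0 XS by (intro power_mono) auto
    then have "X^2 * (Z i)^2 \<le> Sa^2 * (Z i)^2" by (rule mult_right_mono) simp
    then have "Gc^2 * (X^2 * (Z i)^2) \<le> Gc^2 * (Sa^2 * (Z i)^2)" by (rule mult_left_mono) simp
    then show "(Gc * X * Z i)^2 \<le> Gc^2 * (Sa^2 * (Z i)^2)"
      by (simp add: power_mult_distrib mult_ac)
  qed
  finally show "(grad_frob c A B K H M w t \<omega>)^2 \<le> Gc^2 * (\<Sum>i<H. (\<Sum>l\<in>{0..2*H}. alpha \<kappa> \<rho> \<kappa>B H l * uu w t \<omega> l)^2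
              * (\<Sum>l\<in>{0..2*H}. beta \<kappa> \<rho> \<kappa>B H i l * uu w t \<omega> l)^2)"
    unfolding sq Sa_def Z_def by (simp add: sum_distrib_left)
  have "grad_frob c A B K H M w t \<omega> \<le> sqrt (\<Sum>i<H. (Gc * X * Z i)^2)"
    unfolding gf using Si by (intro real_sqrt_le_mono sum_mono) (auto simp: S_def)
  also have "\<dots> \<le> (\<Sum>i<H. Gc * X * Z i)"
    using sq_sum_le[of "{..<H}" "\<lambda>i. Gc * X * Z i"] Gc1 X0 Z0
    by (intro real_le_lsqrt sum_nonneg) auto
  also have "\<dots> \<le> (\<Sum>i<H. Gc * (Sa * Z i))"
    using XS Gc1 Z0 by (intro sum_mono) (simp add: mult.assoc mult_left_mono mult_right_mono)
  finally show "grad_frob c A B K H M w t \<omega> \<le> Gc * (\<Sum>i<H. (\<Sum>l\<in>{0..2*H}. alpha \<kappa> \<rho> \<kappa>B H l * uu w t \<omega> l)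
              * (\<Sum>l\<in>{0..2*H}. beta \<kappa> \<rho> \<kappa>B H i l * uu w t \<omega> l))"
    unfolding Sa_def Z_def by (simp add: sum_distrib_left)
qed

end

lemma geo_le:
  fixes \<rho> :: real
  assumes "0 \<le> \<rho>" "\<rho> < 1" "finite S"
  shows "(\<Sum>l\<in>S. \<rho>^l) \<le> 1 / (1 - \<rho>)"
proof -
  obtain N where "S \<subseteq> {..<N}" using assms(3) finite_nat_bounded by auto
  then have "(\<Sum>l\<in>S. \<rho>^l) \<le> (\<Sum>l<N. \<rho>^l)" using assms by (intro sum_mono2) auto
  also have "\<dots> = (1 - \<rho>^N) / (1 - \<rho>)" using assms by (simp add: sum_gp_strict)
  also have "\<dots> \<le> 1 / (1 - \<rho>)" using assms by (intro divide_right_mono) auto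
  finally show ?thesis .
qed

lemma sum_if_single_le:
  fixes c :: real
  assumes "0 \<le> c" "finite S" "\<And>l. P l \<Longrightarrow> l = a"
  shows "(\<Sum>l\<in>S. if P l then c else 0) \<le> c"
proof -
  have "(\<Sum>l\<in>S. if P l then c else 0) \<le> (\<Sum>l\<in>S. if l = a then c else 0)"
  proof (rule sum_mono)
    fix l assume "l \<in> S"
    show "(if P l then c else 0) \<le> (if l = a then c else 0)"
    proof (cases "P l")
      case True
      then have "l = a" by (rule assms(3))
      with True show ?thesis by simp
    next
      case False
      with assms(1) show ?thesis by simp
    qed
  qed
  also have "\<dots> \<le> c" using assms(1,2) by (simp add: sum.delta')
  finally show ?thesis .
qed

context
  fixes \<gamma> \<kappa> \<kappa>B :: real and H :: nat
  assumes g0: "0 < \<gamma>" and g1: "\<gamma> < 1" and k1: "1 \<le> \<kappa>" and kB1: "1 \<le> \<kappa>B"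
begin

lemma shift_sum_le: "(\<Sum>l\<in>{0..2*H}. if j < l then (1-\<gamma>)^(l - j - 1) else 0) \<le> 1 / \<gamma>"
proof -
  define A where "A = {l\<in>{0..2*H}. j < l}"
  have inj: "inj_on (\<lambda>l. l - j - 1) A" unfolding A_def inj_on_def by auto
  have "(\<Sum>l\<in>{0..2*H}. if j < l then (1-\<gamma>)^(l - j - 1) else 0) = (\<Sum>l\<in>A. (1-\<gamma>)^(l - j - 1))"
    unfolding A_def by (rule sum.inter_filter[symmetric]) simp
  also have "\<dots> = (\<Sum>m\<in>(\<lambda>l. l - j - 1) ` A. (1-\<gamma>)^m)" using sum.reindex[OF inj, of "\<lambda>m. (1-\<gamma>)^m"] by (simp add: o_def)
  also have "\<dots> \<le> 1 / (1 - (1-\<gamma>))" using g0 g1 by (intro geo_le) (auto simp: A_def)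
  finally show ?thesis by simp
qed

lemma psi_sum: "(\<Sum>l\<in>{0..2*H}. psi \<kappa> (1-\<gamma>) \<kappa>B H l) \<le> \<kappa>^2 / \<gamma> + 2 * \<kappa>B^2 * \<kappa>^5 / \<gamma>^2"
proof -
  define \<rho> where "\<rho> = 1 - \<gamma>"
  have r0: "0 \<le> \<rho>" "\<rho> < 1" using g0 g1 by (auto simp: \<rho>_def)
  have a: "(\<Sum>l\<in>{0..2*H}. if l \<le> H then \<kappa>^2 * \<rho>^l else 0) \<le> \<kappa>^2 / \<gamma>"
  proof -
    have "(\<Sum>l\<in>{0..2*H}. if l \<le> H then \<kappa>^2 * \<rho>^l else 0) \<le> (\<Sum>l\<in>{0..2*H}. \<kappa>^2 * \<rho>^l)"
      using r0 by (intro sum_mono) auto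
    also have "\<dots> = \<kappa>^2 * (\<Sum>l\<in>{0..2*H}. \<rho>^l)" by (simp add: sum_distrib_left)
    also have "\<dots> \<le> \<kappa>^2 * (1 / (1 - \<rho>))" using r0 by (intro mult_left_mono geo_le) auto
    finally show ?thesis by (simp add: \<rho>_def)
  qed
  have b: "(\<Sum>l\<in>{0..2*H}. \<Sum>j\<in>{0..H}. if 1 \<le> int l - int j \<and> int l - int j \<le> int H then \<kappa>^2 * \<rho>^j * \<kappa>B * (2 * \<kappa>B * \<kappa>^3 * \<rho>^(l - j - 1)) else 0)
       \<le> 2 * \<kappa>B^2 * \<kappa>^5 / \<gamma>^2"
  proof -
    have "(\<Sum>l\<in>{0..2*H}. \<Sum>j\<in>{0..H}. if 1 \<le> int l - int j \<and> int l - int j \<le> int H then \<kappa>^2 * \<rho>^j * \<kappa>B * (2 * \<kappa>B * \<kappa>^3 * \<rho>^(l - j - 1)) else 0)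
       \<le> (\<Sum>l\<in>{0..2*H}. \<Sum>j\<in>{0..H}. (2 * \<kappa>B^2 * \<kappa>^5) * \<rho>^j * (if j < l then \<rho>^(l - j - 1) else 0))"
    proof (intro sum_mono)
      fix l j
      have k5: "\<kappa>^5 = \<kappa>^2 * \<kappa>^3" by (simp add: power_add[symmetric])
      show "(if 1 \<le> int l - int j \<and> int l - int j \<le> int H then \<kappa>^2 * \<rho>^j * \<kappa>B * (2 * \<kappa>B * \<kappa>^3 * \<rho>^(l - j - 1)) else 0)
         \<le> (2 * \<kappa>B^2 * \<kappa>^5) * \<rho>^j * (if j < l then \<rho>^(l - j - 1) else 0)"
      proof (cases "1 \<le> int l - int j \<and> int l - int j \<le> int H")
        case True
        then have "j < l" by linarith
        with True show ?thesis by (simp add: k5 power2_eq_square mult_ac)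
      next
        case False
        then show ?thesis using r0 k1 by (simp add: zero_le_mult_iff)
      qed
    qed
    also have "\<dots> = (\<Sum>j\<in>{0..H}. (2 * \<kappa>B^2 * \<kappa>^5) * \<rho>^j * (\<Sum>l\<in>{0..2*H}. if j < l then \<rho>^(l - j - 1) else 0))"
      by (subst sum.swap) (simp add: sum_distrib_left)
    also have "\<dots> \<le> (\<Sum>j\<in>{0..H}. (2 * \<kappa>B^2 * \<kappa>^5) * \<rho>^j * (1 / \<gamma>))"
      using r0 shift_sum_le k1 kB1 unfolding \<rho>_def by (intro sum_mono mult_left_mono) auto
    also have "\<dots> = (2 * \<kappa>B^2 * \<kappa>^5 / \<gamma>) * (\<Sum>j\<in>{0..H}. \<rho>^j)"
      by (simp add: sum_distrib_left sum_distrib_right sum_divide_distrib mult_ac)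
    also have "\<dots> \<le> (2 * \<kappa>B^2 * \<kappa>^5 / \<gamma>) * (1 / (1 - \<rho>))"
      using r0 g0 k1 by (intro mult_left_mono geo_le) auto
    finally show ?thesis by (simp add: \<rho>_def power2_eq_square)
  qed
  show ?thesis unfolding psi_def sum.distrib using a b unfolding \<rho>_def by linarith
qed

lemma mu_sum: "(\<Sum>l\<in>{0..2*H}. mu \<kappa> (1-\<gamma>) \<kappa>B H l) \<le> 2 * \<kappa>B * \<kappa>^3 / \<gamma>"
proof -
  have "(\<Sum>l\<in>{0..2*H}. mu \<kappa> (1-\<gamma>) \<kappa>B H l) \<le> (\<Sum>l\<in>{0..2*H}. 2 * \<kappa>B * \<kappa>^3 * (1-\<gamma>)^l)"
    unfolding mu_def using g1 k1 kB1 by (intro sum_mono) auto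
  also have "\<dots> = 2 * \<kappa>B * \<kappa>^3 * (\<Sum>l\<in>{0..2*H}. (1-\<gamma>)^l)" by (simp add: sum_distrib_left)
  also have "\<dots> \<le> 2 * \<kappa>B * \<kappa>^3 * (1 / (1 - (1 - \<gamma>)))"
    using g0 g1 k1 kB1 by (intro mult_left_mono geo_le) auto
  finally show ?thesis by simp
qed

definition W1 where "W1 = (1 + \<kappa>^2) * (\<kappa>^2 / \<gamma> + 2 * \<kappa>B^2 * \<kappa>^5 / \<gamma>^2) + \<kappa> * (2 * \<kappa>B * \<kappa>^3 / \<gamma>)"
definition W2 where "W2 = \<kappa>^2 * \<kappa>B / \<gamma> + 1"

lemma alpha_sum: "(\<Sum>l\<in>{0..2*H}. alpha \<kappa> (1-\<gamma>) \<kappa>B H l) \<le> W1"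
proof -
  have "(\<Sum>l\<in>{0..2*H}. alpha \<kappa> (1-\<gamma>) \<kappa>B H l) = (1 + \<kappa>^2) * (\<Sum>l\<in>{0..2*H}. psi \<kappa> (1-\<gamma>) \<kappa>B H l)
     + \<kappa> * (\<Sum>l\<in>{0..2*H}. mu \<kappa> (1-\<gamma>) \<kappa>B H l)"
    unfolding alpha_def by (simp add: sum.distrib sum_distrib_left)
  also have "\<dots> \<le> W1" unfolding W1_def using psi_sum mu_sum k1
    by (intro add_mono mult_left_mono) auto
  finally show ?thesis .
qed

lemma beta_sum: "(\<Sum>l\<in>{0..2*H}. beta \<kappa> (1-\<gamma>) \<kappa>B H i l) \<le> W2"
proof -
  have "(\<Sum>l\<in>{0..2*H}. \<Sum>j\<in>{0..H}. if cnd H l j i then \<kappa>^2 * (1-\<gamma>)^j * \<kappa>B else 0)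
      = (\<Sum>j\<in>{0..H}. \<Sum>l\<in>{0..2*H}. if cnd H l j i then \<kappa>^2 * (1-\<gamma>)^j * \<kappa>B else 0)"
    by (rule sum.swap)
  also have "\<dots> \<le> (\<Sum>j\<in>{0..H}. \<kappa>^2 * (1-\<gamma>)^j * \<kappa>B)"
  proof (rule sum_mono)
    fix j assume "j \<in> {0..H}"
    show "(\<Sum>l\<in>{0..2*H}. if cnd H l j i then \<kappa>^2 * (1-\<gamma>)^j * \<kappa>B else 0) \<le> \<kappa>^2 * (1-\<gamma>)^j * \<kappa>B"
    proof (rule sum_if_single_le)
      show "0 \<le> \<kappa>^2 * (1-\<gamma>)^j * \<kappa>B" using g1 k1 kB1 by simp
    next
      fix l assume "cnd H l j i"
      then show "l = i + j + 1" by presburger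
    qed simp
  qed
  also have "\<dots> = \<kappa>^2 * \<kappa>B * (\<Sum>j\<in>{0..H}. (1-\<gamma>)^j)" by (simp add: sum_distrib_left mult_ac)
  also have "\<dots> \<le> \<kappa>^2 * \<kappa>B * (1 / (1 - (1 - \<gamma>)))"
    using g0 g1 k1 kB1 by (intro mult_left_mono geo_le) auto
  finally have s1: "(\<Sum>l\<in>{0..2*H}. \<Sum>j\<in>{0..H}. if cnd H l j i then \<kappa>^2 * (1-\<gamma>)^j * \<kappa>B else 0) \<le> \<kappa>^2 * \<kappa>B / \<gamma>"
    by simp
  have s2: "(\<Sum>l\<in>{0..2*H}. if l = i then (1::real) else 0) \<le> 1"
    by (rule sum_if_single_le) auto
  show ?thesis unfolding beta_def sum.distrib W2_def using s1 s2 by linarith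
qed



end

lemma J2:
  fixes \<alpha> u :: "nat \<Rightarrow> real"
  assumes "\<And>l. l \<in> S \<Longrightarrow> 0 \<le> \<alpha> l"
  shows "(\<Sum>l\<in>S. \<alpha> l * u l)^2 \<le> (\<Sum>l\<in>S. \<alpha> l) * (\<Sum>l\<in>S. \<alpha> l * (u l)^2)"
proof -
  have "(\<Sum>l\<in>S. \<alpha> l * u l) = (\<Sum>l\<in>S. sqrt (\<alpha> l) * (sqrt (\<alpha> l) * u l))"
    using assms by (intro sum.cong) (auto simp: mult.assoc[symmetric])
  also have "(\<dots>)^2 \<le> (\<Sum>l\<in>S. (sqrt (\<alpha> l))^2) * (\<Sum>l\<in>S. (sqrt (\<alpha> l) * u l)^2)"
    by (rule Cauchy_Schwarz_ineq_sum)
  also have "\<dots> = (\<Sum>l\<in>S. \<alpha> l) * (\<Sum>l\<in>S. \<alpha> l * (u l)^2)"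
    using assms by (intro arg_cong2[where f="(*)"] sum.cong) (auto simp: power_mult_distrib)
  finally show ?thesis .
qed

lemma J4:
  fixes \<alpha> u :: "nat \<Rightarrow> real"
  assumes "\<And>l. l \<in> S \<Longrightarrow> 0 \<le> \<alpha> l"
  shows "(\<Sum>l\<in>S. \<alpha> l * u l)^4 \<le> (\<Sum>l\<in>S. \<alpha> l)^3 * (\<Sum>l\<in>S. \<alpha> l * (u l)^4)"
proof -
  have A0: "0 \<le> (\<Sum>l\<in>S. \<alpha> l)" using assms by (simp add: sum_nonneg)
  have "(\<Sum>l\<in>S. \<alpha> l * u l)^4 = ((\<Sum>l\<in>S. \<alpha> l * u l)^2)^2" by simp
  also have "\<dots> \<le> ((\<Sum>l\<in>S. \<alpha> l) * (\<Sum>l\<in>S. \<alpha> l * (u l)^2))^2"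
    using J2[OF assms] by (intro power_mono) auto
  also have "\<dots> = (\<Sum>l\<in>S. \<alpha> l)^2 * (\<Sum>l\<in>S. \<alpha> l * (u l)^2)^2" by (simp add: power_mult_distrib)
  also have "\<dots> \<le> (\<Sum>l\<in>S. \<alpha> l)^2 * ((\<Sum>l\<in>S. \<alpha> l) * (\<Sum>l\<in>S. \<alpha> l * ((u l)^2)^2))"
    using J2[OF assms, where u="\<lambda>l. (u l)^2"] by (intro mult_left_mono) auto
  also have "\<dots> = (\<Sum>l\<in>S. \<alpha> l)^3 * (\<Sum>l\<in>S. \<alpha> l * (u l)^4)"
  proof -
    have e: "((x::real)^2)^2 = x^4" for x by (simp flip: power_mult)
    show ?thesis unfolding e by (simp add: power2_eq_square power3_eq_cube)
  qed
  finally show ?thesis .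
qed

lemma amgm: "0 < p \<Longrightarrow> a * b \<le> (p * a^2 + b^2 / p) / (2::real)"
proof -
  assume p: "0 < p"
  have "0 \<le> (p * a - b)^2" by simp
  then have "2 * p * (a * b) \<le> p^2 * a^2 + b^2" by (simp add: power2_diff power_mult_distrib algebra_simps)
  then show ?thesis using p by (simp add: field_simps power2_eq_square)
qed

lemma prod4_bound:
  fixes \<alpha> \<beta> u :: "nat \<Rightarrow> real"
  assumes a0: "\<And>l. l \<in> S \<Longrightarrow> 0 \<le> \<alpha> l" and b0: "\<And>l. l \<in> S \<Longrightarrow> 0 \<le> \<beta> l"
    and u0: "\<And>l. 0 \<le> u l"
    and sa: "(\<Sum>l\<in>S. \<alpha> l) \<le> V1" and sb: "(\<Sum>l\<in>S. \<beta> l) \<le> V2" and W: "0 < V1" "0 < V2"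
  shows "(\<Sum>l\<in>S. \<alpha> l * u l)^2 * (\<Sum>l\<in>S. \<beta> l * u l)^2
     \<le> (V2^2 * V1 * (\<Sum>l\<in>S. \<alpha> l * (u l)^4) + V1^2 * V2 * (\<Sum>l\<in>S. \<beta> l * (u l)^4)) / 2"
proof -
  define X Z where "X = (\<Sum>l\<in>S. \<alpha> l * u l)" and "Z = (\<Sum>l\<in>S. \<beta> l * u l)"
  define p where "p = V2^2 / V1^2"
  have p: "0 < p" using W by (simp add: p_def)
  have SA0: "0 \<le> (\<Sum>l\<in>S. \<alpha> l * (u l)^4)" "0 \<le> (\<Sum>l\<in>S. \<beta> l * (u l)^4)"
    using a0 b0 u0 by (auto intro!: sum_nonneg)
  have X4: "X^4 \<le> V1^3 * (\<Sum>l\<in>S. \<alpha> l * (u l)^4)"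
    unfolding X_def using J4[OF a0, where u=u] sa SA0 a0
    by (meson order_trans mult_right_mono power_mono sum_nonneg)
  have Z4: "Z^4 \<le> V2^3 * (\<Sum>l\<in>S. \<beta> l * (u l)^4)"
    unfolding Z_def using J4[OF b0, where u=u] sb SA0 b0
    by (meson order_trans mult_right_mono power_mono sum_nonneg)
  have "X^2 * Z^2 \<le> (p * (X^2)^2 + (Z^2)^2 / p) / 2" by (rule amgm[OF p])
  also have "\<dots> = (p * X^4 + Z^4 / p) / 2" by simp
  also have "\<dots> \<le> (p * (V1^3 * (\<Sum>l\<in>S. \<alpha> l * (u l)^4)) + (V2^3 * (\<Sum>l\<in>S. \<beta> l * (u l)^4)) / p) / 2"
    using X4 Z4 p by (intro divide_right_mono add_mono mult_left_mono) auto
  also have "\<dots> = (V2^2 * V1 * (\<Sum>l\<in>S. \<alpha> l * (u l)^4) + V1^2 * V2 * (\<Sum>l\<in>S. \<beta> l * (u l)^4)) / 2"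
    using W unfolding p_def by (simp add: field_simps power2_eq_square power3_eq_cube)
  finally show ?thesis unfolding X_def Z_def .
qed

lemma prod2_bound:
  fixes \<alpha> \<beta> u :: "nat \<Rightarrow> real"
  assumes a0: "\<And>l. l \<in> S \<Longrightarrow> 0 \<le> \<alpha> l" and b0: "\<And>l. l \<in> S \<Longrightarrow> 0 \<le> \<beta> l"
    and u0: "\<And>l. 0 \<le> u l"
    and sa: "(\<Sum>l\<in>S. \<alpha> l) \<le> V1" and sb: "(\<Sum>l\<in>S. \<beta> l) \<le> V2" and W: "0 < V1" "0 < V2"
  shows "(\<Sum>l\<in>S. \<alpha> l * u l) * (\<Sum>l\<in>S. \<beta> l * u l)
     \<le> (V2 * (\<Sum>l\<in>S. \<alpha> l * (u l)^2) + V1 * (\<Sum>l\<in>S. \<beta> l * (u l)^2)) / 2"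
proof -
  define X Z where "X = (\<Sum>l\<in>S. \<alpha> l * u l)" and "Z = (\<Sum>l\<in>S. \<beta> l * u l)"
  define p where "p = V2 / V1"
  have p: "0 < p" using W by (simp add: p_def)
  have SA0: "0 \<le> (\<Sum>l\<in>S. \<alpha> l * (u l)^2)" "0 \<le> (\<Sum>l\<in>S. \<beta> l * (u l)^2)"
    using a0 b0 u0 by (auto intro!: sum_nonneg)
  have X2: "X^2 \<le> V1 * (\<Sum>l\<in>S. \<alpha> l * (u l)^2)"
    unfolding X_def using J2[OF a0, where u=u] sa SA0 by (meson order_trans mult_right_mono)
  have Z2: "Z^2 \<le> V2 * (\<Sum>l\<in>S. \<beta> l * (u l)^2)"
    unfolding Z_def using J2[OF b0, where u=u] sb SA0 by (meson order_trans mult_right_mono)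
  have "X * Z \<le> (p * X^2 + Z^2 / p) / 2" by (rule amgm[OF p])
  also have "\<dots> \<le> (p * (V1 * (\<Sum>l\<in>S. \<alpha> l * (u l)^2)) + (V2 * (\<Sum>l\<in>S. \<beta> l * (u l)^2)) / p) / 2"
    using X2 Z2 p by (intro divide_right_mono add_mono mult_left_mono) auto
  also have "\<dots> = (V2 * (\<Sum>l\<in>S. \<alpha> l * (u l)^2) + V1 * (\<Sum>l\<in>S. \<beta> l * (u l)^2)) / 2"
    using W unfolding p_def by (simp add: field_simps)
  finally show ?thesis unfolding X_def Z_def .
qed

context prob_space
begin

lemma wext_meas:
  assumes A2: "assm_A2ii w \<sigma>"
  shows "(\<lambda>\<omega>. wext w s \<omega>) \<in> borel_measurable M"
proof (cases "s < 0")
  case True then show ?thesis by (simp add: wext_def)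
next
  case False
  have "w (nat s) \<in> borel_measurable M" using A2 unfolding assm_A2ii_def by auto
  with False show ?thesis by (simp add: wext_def)
qed

lemma wext4:
  assumes A2: "assm_A2ii w \<sigma>"
  shows "integrable M (\<lambda>\<omega>. norm (wext w s \<omega>) ^ 4) \<and> expectation (\<lambda>\<omega>. norm (wext w s \<omega>) ^ 4) \<le> \<sigma>^4"
proof (cases "s < 0")
  case True
  have "0 \<le> \<sigma>^4" by (simp add: zero_le_even_power)
  with True show ?thesis by (simp add: wext_def)
next
  case False
  then show ?thesis using A2 unfolding assm_A2ii_def wext_def by simp
qed

lemma wext2:
  assumes A2: "assm_A2ii w \<sigma>"
  shows "integrable M (\<lambda>\<omega>. norm (wext w s \<omega>) ^ 2) \<and> expectation (\<lambda>\<omega>. norm (wext w s \<omega>) ^ 2) \<le> \<sigma>^2"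
proof -
  define X where "X \<omega> = norm (wext w s \<omega>) ^ 2" for \<omega>
  have Xm: "X \<in> borel_measurable M" unfolding X_def using wext_meas[OF A2] by measurable
  have X2: "(\<lambda>\<omega>. (X \<omega>)^2) = (\<lambda>\<omega>. norm (wext w s \<omega>) ^ 4)" unfolding X_def by (simp flip: power_mult)
  have i4: "integrable M (\<lambda>\<omega>. (X \<omega>)^2)" using wext4[OF A2, of s] X2 by simp
  have iX: "integrable M X" by (rule square_integrable_imp_integrable[OF Xm i4])
  have "0 \<le> variance X" by (rule variance_positive)
  then have "(expectation X)^2 \<le> expectation (\<lambda>\<omega>. (X \<omega>)^2)" using variance_eq[OF iX i4] by simp
  also have "\<dots> \<le> \<sigma>^4" using wext4[OF A2, of s] X2 by simp
  also have "\<dots> = (\<sigma>^2)^2" by (simp flip: power_mult)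
  finally have "(expectation X)^2 \<le> (\<sigma>^2)^2" .
  then have "expectation X \<le> \<sigma>^2" by (rule power2_le_imp_le) simp
  then show ?thesis using iX unfolding X_def by simp
qed

end

lemma mv_cont: "continuous_on UNIV (\<lambda>x. (X::real^'n^'m) *v x)"
  by (rule linear_continuous_on[OF matrix_vector_mul_bounded_linear])

lemma deriv_meas:
  fixes F :: "'a \<Rightarrow> real \<Rightarrow> real"
  assumes m: "\<And>s. (\<lambda>\<omega>. F \<omega> s) \<in> borel_measurable N"
    and d: "\<And>\<omega>. \<exists>D. (F \<omega> has_real_derivative D) (at 0)"
  shows "(\<lambda>\<omega>. deriv (F \<omega>) 0) \<in> borel_measurable N"
proof (rule borel_measurable_LIMSEQ_real[where u="\<lambda>n \<omega>. (F \<omega> (0 + inverse (real (Suc n))) - F \<omega> 0) / inverse (real (Suc n))"])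
  fix \<omega>
  obtain D where D: "(F \<omega> has_real_derivative D) (at 0)" using d by blast
  have dd: "deriv (F \<omega>) 0 = D" using D by (rule DERIV_imp_deriv)
  have lim: "((\<lambda>h. (F \<omega> (0 + h) - F \<omega> 0) / h) \<longlongrightarrow> D) (at 0)" using DERIV_D[OF D] .
  have seq: "filterlim (\<lambda>n. inverse (real (Suc n))) (at 0) sequentially"
    unfolding filterlim_at using LIMSEQ_inverse_real_of_nat by auto
  show "(\<lambda>n. (F \<omega> (0 + inverse (real (Suc n))) - F \<omega> 0) / inverse (real (Suc n))) \<longlonglongrightarrow> deriv (F \<omega>) 0"
    unfolding dd using filterlim_compose[OF lim seq] .
next
  fix n show "(\<lambda>\<omega>. (F \<omega> (0 + inverse (real (Suc n))) - F \<omega> 0) / inverse (real (Suc n))) \<in> borel_measurable N"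
    using m by measurable
qed

context prob_space
begin

lemma ystate_meas:
  assumes A2: "assm_A2ii w \<sigma>"
  shows "(\<lambda>\<omega>. ystate A B K H Ms w t \<omega>) \<in> borel_measurable M"
  unfolding ystate_def
  by (intro borel_measurable_sum borel_measurable_continuous_on[OF mv_cont] wext_meas[OF A2])

lemma vinput_meas:
  assumes A2: "assm_A2ii w \<sigma>"
  shows "(\<lambda>\<omega>. vinput A B K H Ms w t \<omega>) \<in> borel_measurable M"
  unfolding vinput_def
  by (intro borel_measurable_add borel_measurable_uminus borel_measurable_continuous_on[OF mv_cont]
      borel_measurable_sum wext_meas[OF A2] ystate_meas[OF A2])

lemma fcost_meas:
  assumes A1: "assm_A1 c Gc" and A2: "assm_A2ii w \<sigma>"
  shows "(\<lambda>\<omega>. fcost c A B K H M' w t \<omega>) \<in> borel_measurable M"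
proof -
  have "continuous_on UNIV (\<lambda>p. c t (fst p) (snd p))"
  proof (rule continuous_at_imp_continuous_on, intro ballI)
    fix p
    obtain gx gu where "((\<lambda>p. c t (fst p) (snd p)) has_derivative (\<lambda>h. gx \<bullet> fst h + gu \<bullet> snd h)) (at (fst p, snd p))"
      using A1 unfolding assm_A1_def by blast
    then show "isCont (\<lambda>p. c t (fst p) (snd p)) p" using has_derivative_continuous by fastforce
  qed
  from borel_measurable_continuous_on[OF this borel_measurable_Pair[OF ystate_meas[OF A2] vinput_meas[OF A2]]]
  show ?thesis unfolding fcost_def Fcost_def by simp
qed

lemma grad_meas:
  assumes A1: "assm_A1 c Gc" and A2: "assm_A2ii w \<sigma>"
  shows "(\<lambda>\<omega>. grad_frob c A B K H M' w t \<omega>) \<in> borel_measurable M"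
proof -
  have d: "(\<lambda>\<omega>. deriv (\<lambda>s. fcost c A B K H (M'(i := M' i + s *\<^sub>R munit a b)) w t \<omega>) 0) \<in> borel_measurable M"
    if iH: "i < H" for i a b
  proof (rule deriv_meas)
    fix s show "(\<lambda>\<omega>. fcost c A B K H (M'(i := M' i + s *\<^sub>R munit a b)) w t \<omega>) \<in> borel_measurable M"
      by (rule fcost_meas[OF A1 A2])
  next
    fix \<omega>
    obtain gx gu where hd: "((\<lambda>p. c t (fst p) (snd p)) has_derivative (\<lambda>h. gx \<bullet> fst h + gu \<bullet> snd h))
      (at (ystate A B K H (\<lambda>_. M') w t \<omega>, vinput A B K H (\<lambda>_. M') w t \<omega>))"
      using A1 unfolding assm_A1_def by blast
    show "\<exists>D. ((\<lambda>s. fcost c A B K H (M'(i := M' i + s *\<^sub>R munit a b)) w t \<omega>) has_real_derivative D) (at 0)"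
      using fcost_deriv[where c=c and t=t and A=A and B=B and K=K and H=H and M=M' and w=w and \<omega>=\<omega>
          and gx=gx and gu=gu and i=i and E="munit a b", OF iH hd] by blast
  qed
  show ?thesis unfolding grad_frob_def
    by (rule measurable_compose[OF _ borel_measurable_sqrt], intro borel_measurable_sum borel_measurable_power d) auto
qed

end

lemma psi_nn: "0 \<le> \<rho> \<Longrightarrow> 0 \<le> \<kappa> \<Longrightarrow> 0 \<le> \<kappa>B \<Longrightarrow> 0 \<le> psi \<kappa> \<rho> \<kappa>B H l"
  unfolding psi_def by (intro add_nonneg_nonneg sum_nonneg) (auto intro!: mult_nonneg_nonneg)

lemma alpha_nn: "0 \<le> \<rho> \<Longrightarrow> 0 \<le> \<kappa> \<Longrightarrow> 0 \<le> \<kappa>B \<Longrightarrow> 0 \<le> alpha \<kappa> \<rho> \<kappa>B H l"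
  unfolding alpha_def mu_def using psi_nn[of \<rho> \<kappa> \<kappa>B H l]
  by (intro add_nonneg_nonneg mult_nonneg_nonneg) auto

lemma beta_nn: "0 \<le> \<rho> \<Longrightarrow> 0 \<le> \<kappa>B \<Longrightarrow> 0 \<le> beta \<kappa> \<rho> \<kappa>B H i l"
  unfolding beta_def by (intro add_nonneg_nonneg sum_nonneg) auto

context prob_space
begin

lemma lin_comb_E:
  fixes f :: "nat \<Rightarrow> 'a \<Rightarrow> real"
  assumes "\<And>l. l \<in> S \<Longrightarrow> 0 \<le> c l" and "\<And>l. l \<in> S \<Longrightarrow> integrable M (f l) \<and> expectation (f l) \<le> s"
  shows "integrable M (\<lambda>\<omega>. \<Sum>l\<in>S. c l * f l \<omega>) \<and> expectation (\<lambda>\<omega>. \<Sum>l\<in>S. c l * f l \<omega>) \<le> (\<Sum>l\<in>S. c l) * s"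
proof
  show i: "integrable M (\<lambda>\<omega>. \<Sum>l\<in>S. c l * f l \<omega>)" using assms by auto
  have "expectation (\<lambda>\<omega>. \<Sum>l\<in>S. c l * f l \<omega>) = (\<Sum>l\<in>S. c l * expectation (f l))"
  proof -
    have "expectation (\<lambda>\<omega>. \<Sum>l\<in>S. c l * f l \<omega>) = (\<Sum>l\<in>S. expectation (\<lambda>\<omega>. c l * f l \<omega>))"
      by (rule Bochner_Integration.integral_sum) (use assms in auto)
    also have "\<dots> = (\<Sum>l\<in>S. c l * expectation (f l))" by simp
    finally show ?thesis .
  qed
  also have "\<dots> \<le> (\<Sum>l\<in>S. c l * s)" using assms by (intro sum_mono mult_left_mono) auto
  finally show "expectation (\<lambda>\<omega>. \<Sum>l\<in>S. c l * f l \<omega>) \<le> (\<Sum>l\<in>S. c l) * s"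
    by (simp add: sum_distrib_right)
qed

lemma markov_good:
  fixes g Bf :: "'a \<Rightarrow> real"
  assumes gm: "g \<in> borel_measurable M" and Bi: "integrable M Bf"
    and le: "\<And>\<omega>. \<omega> \<in> space M \<Longrightarrow> g \<omega> \<le> Bf \<omega>" and B0: "\<And>\<omega>. \<omega> \<in> space M \<Longrightarrow> 0 \<le> Bf \<omega>"
    and a: "0 < a" and e: "expectation Bf \<le> e"
  shows "prob {\<omega> \<in> space M. g \<omega> \<le> a} \<ge> 1 - e / a"
proof -
  have Bm: "Bf \<in> borel_measurable M" using Bi by auto
  have ev: "{\<omega> \<in> space M. a \<le> Bf \<omega>} \<in> events" using Bm by measurable
  have "prob {\<omega> \<in> space M. a \<le> Bf \<omega>} \<le> expectation Bf / a"
    using integral_Markov_inequality_measure[OF Bi ev _ a] B0 by auto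
  also have "\<dots> \<le> e / a" using e a by (simp add: divide_right_mono)
  finally have m: "prob {\<omega> \<in> space M. a \<le> Bf \<omega>} \<le> e / a" .
  have "space M - {\<omega> \<in> space M. a \<le> Bf \<omega>} \<subseteq> {\<omega> \<in> space M. g \<omega> \<le> a}"
    using le by force
  moreover have "{\<omega> \<in> space M. g \<omega> \<le> a} \<in> events" using gm by measurable
  ultimately have "prob (space M - {\<omega> \<in> space M. a \<le> Bf \<omega>}) \<le> prob {\<omega> \<in> space M. g \<omega> \<le> a}"
    by (intro finite_measure_mono)
  moreover have "prob (space M - {\<omega> \<in> space M. a \<le> Bf \<omega>}) = 1 - prob {\<omega> \<in> space M. a \<le> Bf \<omega>}"
    using prob_compl[OF ev] .
  ultimately show ?thesis using m by linarith
qed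

end

lemma W1_le:
  assumes g: "0 < \<gamma>" "\<gamma> < 1" and k: "1 \<le> \<kappa>" and kb: "1 \<le> \<kappa>B"
  shows "W1 \<gamma> \<kappa> \<kappa>B \<le> 8 * \<kappa>B^2 * \<kappa>^7 / \<gamma>^2"
proof -
  define P where "P = \<kappa>B^2 * \<kappa>^5 / \<gamma>^2"
  have gg: "1 / \<gamma> \<le> 1 / \<gamma>^2" using g by (simp add: divide_le_eq_1 power2_eq_square field_simps)
  have kk: "\<kappa>^2 \<le> \<kappa>^5" using k by (intro power_increasing) auto
  have kb2: "1 \<le> \<kappa>B^2" using kb by (simp add: one_le_power)
  have t1: "\<kappa>^2 / \<gamma> \<le> P"
  proof -
    have "\<kappa>^2 / \<gamma> = \<kappa>^2 * (1/\<gamma>)" by simp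
    also have "\<dots> \<le> (\<kappa>B^2 * \<kappa>^5) * (1/\<gamma>^2)"
    proof (rule mult_mono)
      have "\<kappa>^5 = 1 * \<kappa>^5" by simp
      also have "\<dots> \<le> \<kappa>B^2 * \<kappa>^5" using kb2 k by (intro mult_right_mono) auto
      finally show "\<kappa>^2 \<le> \<kappa>B^2 * \<kappa>^5" using kk by linarith
    qed (use gg g k in auto)
    finally show ?thesis by (simp add: P_def)
  qed
  have P0: "0 \<le> P" unfolding P_def using k by simp
  have t2: "(1 + \<kappa>^2) * (\<kappa>^2 / \<gamma> + 2 * \<kappa>B^2 * \<kappa>^5 / \<gamma>^2) \<le> (2 * \<kappa>^2) * (3 * P)"
  proof (rule mult_mono)
    show "1 + \<kappa>^2 \<le> 2 * \<kappa>^2" using k by (simp add: one_le_power)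
    show "\<kappa>^2 / \<gamma> + 2 * \<kappa>B^2 * \<kappa>^5 / \<gamma>^2 \<le> 3 * P" using t1 unfolding P_def by simp
    show "0 \<le> \<kappa>^2 / \<gamma> + 2 * \<kappa>B^2 * \<kappa>^5 / \<gamma>^2" using g k by (intro add_nonneg_nonneg) auto
  qed simp
  have t3: "\<kappa> * (2 * \<kappa>B * \<kappa>^3 / \<gamma>) \<le> 2 * \<kappa>B^2 * \<kappa>^7 / \<gamma>^2"
  proof -
    have a: "\<kappa>B \<le> \<kappa>B^2" using kb by (simp add: power2_eq_square)
    have b: "\<kappa>^4 \<le> \<kappa>^7" using k by (intro power_increasing) auto
    have k4: "\<kappa>^4 = \<kappa> * \<kappa>^3" using power_add[of \<kappa> 1 3] by simp
    have "\<kappa> * (2 * \<kappa>B * \<kappa>^3 / \<gamma>) = 2 * (\<kappa>B * \<kappa>^4) * (1/\<gamma>)" unfolding k4 by (simp add: mult_ac)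
    also have "\<dots> \<le> 2 * (\<kappa>B^2 * \<kappa>^7) * (1/\<gamma>^2)"
      using a b gg kb k g by (intro mult_mono) auto
    finally show ?thesis by simp
  qed
  have "W1 \<gamma> \<kappa> \<kappa>B \<le> (2 * \<kappa>^2) * (3 * P) + 2 * \<kappa>B^2 * \<kappa>^7 / \<gamma>^2"
    unfolding W1_def[OF g k kb] using t2 t3 by linarith
  also have "(2 * \<kappa>^2) * (3 * P) = 6 * \<kappa>B^2 * \<kappa>^7 / \<gamma>^2"
  proof -
    have k7: "\<kappa>^7 = \<kappa>^2 * \<kappa>^5" using power_add[of \<kappa> 2 5] by simp
    show ?thesis unfolding P_def k7 by (simp add: mult_ac)
  qed
  finally show ?thesis by simp
qed

lemma aux2: "(1::real) \<le> q \<Longrightarrow> q + 1 \<le> 2 * q" by linarith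

lemma W2_le:
  assumes g: "0 < \<gamma>" "\<gamma> < 1" and k: "1 \<le> \<kappa>" and kb: "1 \<le> \<kappa>B"
  shows "W2 \<gamma> \<kappa> \<kappa>B \<le> 2 * \<kappa>^2 * \<kappa>B / \<gamma>"
proof -
  have "1 \<le> \<kappa>^2 * \<kappa>B / \<gamma>"
  proof -
    have k2: "1 \<le> \<kappa>^2" using k by (simp add: one_le_power)
    have "1 * 1 \<le> \<kappa>^2 * \<kappa>B" using k2 kb by (intro mult_mono) auto
    then have "1 \<le> \<kappa>^2 * \<kappa>B" by simp
    also have "\<dots> \<le> \<kappa>^2 * \<kappa>B / \<gamma>" using g k kb by (simp add: le_divide_eq)
    finally show ?thesis .
  qed
  then have "\<kappa>^2*\<kappa>B/\<gamma> + 1 \<le> 2 * (\<kappa>^2*\<kappa>B/\<gamma>)"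
    by (rule aux2)
  then show ?thesis unfolding W2_def[OF g k kb] by (simp add: mult.assoc)
qed

lemma W_pos:
  assumes g: "0 < \<gamma>" "\<gamma> < 1" and k: "1 \<le> \<kappa>" and kb: "1 \<le> \<kappa>B"
  shows "0 < W1 \<gamma> \<kappa> \<kappa>B" "0 < W2 \<gamma> \<kappa> \<kappa>B"
  unfolding W1_def[OF g k kb] W2_def[OF g k kb] using g k kb
  by (auto intro!: add_pos_pos mult_pos_pos divide_pos_pos)

lemma const1:
  fixes \<gamma> \<kappa> \<kappa>B L Hr V1 V2 n C G :: real
  assumes g: "0 < \<gamma>" "\<gamma> < 1" and k: "1 \<le> \<kappa>" and kb: "1 \<le> \<kappa>B" and L: "1 \<le> L"
    and Hr: "0 \<le> Hr" "Hr \<le> 3 * L / \<gamma>" and V1: "0 \<le> V1" "V1 \<le> 8 * \<kappa>B^2 * \<kappa>^7 / \<gamma>^2"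
    and V2: "0 \<le> V2" "V2 \<le> 2 * \<kappa>^2 * \<kappa>B / \<gamma>" and n: "1 \<le> n" and C: "0 < C" and G: "0 \<le> G"
  shows "G * (Hr * V1^2 * V2^2) / (C * L^4) \<le> 26244 * n^2 * G * \<kappa>B^6 * \<kappa>^18 / (C * \<gamma>^8 * (1-\<gamma>)^4)"
proof -
  define q where "q = 1 / \<gamma>"
  have q1: "1 \<le> q" using g by (simp add: q_def)
  have q0: "0 < q" using q1 by simp
  define Q where "Q = G * \<kappa>B^6 * \<kappa>^18 / C"
  have Q0: "0 \<le> Q" using G C k kb by (simp add: Q_def)
  have "Hr * V1^2 * V2^2 \<le> (3 * L * q) * (8 * \<kappa>B^2 * \<kappa>^7 * q^2)^2 * (2 * \<kappa>^2 * \<kappa>B * q)^2"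
  proof (intro mult_mono power_mono)
    show "Hr \<le> 3 * L * q" using Hr by (simp add: q_def)
    show "V1 \<le> 8 * \<kappa>B^2 * \<kappa>^7 * q^2" using V1 by (simp add: q_def power_one_over)
    show "V2 \<le> 2 * \<kappa>^2 * \<kappa>B * q" using V2 by (simp add: q_def)
  qed (use Hr V1 V2 L q0 k kb in auto)
  also have "\<dots> = 768 * L * \<kappa>B^6 * \<kappa>^18 * q^7" by algebra
  finally have h1: "Hr * V1^2 * V2^2 \<le> 768 * L * \<kappa>B^6 * \<kappa>^18 * q^7" .
  have L4: "L \<le> L^4" using L by (metis power_increasing_iff power_one_right one_le_numeral power_increasing)
  have "G * (Hr * V1^2 * V2^2) / (C * L^4) \<le> G * (768 * L * \<kappa>B^6 * \<kappa>^18 * q^7) / (C * L^4)"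
    using h1 G C L by (intro divide_right_mono mult_left_mono) auto
  also have "\<dots> = 768 * Q * q^7 * (L / L^4)" unfolding Q_def using C by (simp add: field_simps)
  also have "\<dots> \<le> 768 * Q * q^7 * 1" using L4 L Q0 q0 by (intro mult_left_mono) auto
  also have "\<dots> \<le> 26244 * Q * q^8"
  proof -
    have "q^7 \<le> q^8" using q1 by (intro power_increasing) auto
    moreover have "0 \<le> q^7" using q0 by simp
    ultimately have "768 * q^7 \<le> 26244 * q^8" by linarith
    then have "(768 * q^7) * Q \<le> (26244 * q^8) * Q" using Q0 by (rule mult_right_mono)
    then show ?thesis by (simp add: mult_ac)
  qed
  also have "\<dots> \<le> 26244 * n^2 * Q * (q^8 / (1-\<gamma>)^4)"
  proof -
    have "1 \<le> n^2" using n by (simp add: one_le_power)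
    moreover have "q^8 \<le> q^8 / (1-\<gamma>)^4"
      using g q0 by (simp add: le_divide_eq power_le_one)
    ultimately have "1 * q^8 \<le> n^2 * (q^8 / (1-\<gamma>)^4)" using q0 by (intro mult_mono) auto
    then have "(26244 * Q) * (1 * q^8) \<le> (26244 * Q) * (n^2 * (q^8 / (1-\<gamma>)^4))"
      using Q0 by (intro mult_left_mono) auto
    then show ?thesis by (simp add: mult_ac)
  qed
  also have "\<dots> = 26244 * n^2 * G * \<kappa>B^6 * \<kappa>^18 / (C * \<gamma>^8 * (1-\<gamma>)^4)"
    unfolding Q_def q_def using g C by (simp add: field_simps power_one_over)
  finally show ?thesis .
qed


lemma const2:
  fixes \<gamma> \<kappa> \<kappa>B L Hr V1 V2 n C G :: real
  assumes g: "0 < \<gamma>" "\<gamma> < 1" and k: "1 \<le> \<kappa>" and kb: "1 \<le> \<kappa>B" and L: "1 \<le> L"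
    and Hr: "0 \<le> Hr" "Hr \<le> 3 * L / \<gamma>" "Hr + 1 \<le> 4 * L / \<gamma>"
    and V1: "0 \<le> V1" "V1 \<le> 8 * \<kappa>B^2 * \<kappa>^7 / \<gamma>^2"
    and V2: "0 \<le> V2" "V2 \<le> 2 * \<kappa>^2 * \<kappa>B / \<gamma>" and n: "1 \<le> n" and C: "0 < C" and G: "0 \<le> G"
  shows "G * ((Hr + 1)^2 * Hr * V1 * V2) / (C * L powr (9/2)) \<le> 39366 * n^2 * G * \<kappa>B^3 * \<kappa>^9 / (C * \<gamma> powr (13/2) * (1-\<gamma>)^2)"
proof -
  define q where "q = 1 / \<gamma>"
  have q1: "1 \<le> q" using g by (simp add: q_def)
  have q0: "0 < q" using q1 by simp
  define Q where "Q = G * \<kappa>B^3 * \<kappa>^9 / C"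
  have Q0: "0 \<le> Q" using G C k kb by (simp add: Q_def)
  have "(Hr + 1)^2 * Hr * V1 * V2 \<le> (4 * L * q)^2 * (3 * L * q) * (8 * \<kappa>B^2 * \<kappa>^7 * q^2) * (2 * \<kappa>^2 * \<kappa>B * q)"
  proof (intro mult_mono power_mono)
    show "Hr + 1 \<le> 4 * L * q" using Hr by (simp add: q_def)
    show "Hr \<le> 3 * L * q" using Hr by (simp add: q_def)
    show "V1 \<le> 8 * \<kappa>B^2 * \<kappa>^7 * q^2" using V1 by (simp add: q_def power_one_over)
    show "V2 \<le> 2 * \<kappa>^2 * \<kappa>B * q" using V2 by (simp add: q_def)
  qed (use Hr V1 V2 L q0 k kb in auto)
  also have "\<dots> = 768 * L^3 * \<kappa>B^3 * \<kappa>^9 * q^6" by algebra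
  finally have h1: "(Hr + 1)^2 * Hr * V1 * V2 \<le> 768 * L^3 * \<kappa>B^3 * \<kappa>^9 * q^6" .
  have Lp: "L^3 \<le> L powr (9/2)"
  proof -
    have "L^3 = L powr (real 3)" using L by (simp add: powr_realpow)
    also have "\<dots> \<le> L powr (9/2)" using L by (intro powr_mono) auto
    finally show ?thesis .
  qed
  have Lp0: "0 < L powr (9/2)" using L by simp
  have "G * ((Hr + 1)^2 * Hr * V1 * V2) / (C * L powr (9/2)) \<le> G * (768 * L^3 * \<kappa>B^3 * \<kappa>^9 * q^6) / (C * L powr (9/2))"
    using h1 G C Lp0 by (intro divide_right_mono mult_left_mono) auto
  also have "\<dots> = 768 * Q * q^6 * (L^3 / L powr (9/2))" unfolding Q_def using C Lp0 by (simp add: field_simps)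
  also have "\<dots> \<le> 768 * Q * q^6 * 1" using Lp Lp0 Q0 q0 by (intro mult_left_mono) auto
  also have "\<dots> \<le> 39366 * n^2 * Q * (1 / (\<gamma> powr (13/2) * (1-\<gamma>)^2))"
  proof -
    have gp: "\<gamma> powr (13/2) \<le> \<gamma>^6"
    proof -
      have "\<gamma> powr (13/2) \<le> \<gamma> powr (real 6)" using g by (intro powr_mono') auto
      also have "\<dots> = \<gamma>^6" using g by (simp add: powr_realpow)
      finally show ?thesis .
    qed
    have d0: "0 < \<gamma> powr (13/2) * (1-\<gamma>)^2" using g by simp
    have "\<gamma> powr (13/2) * (1-\<gamma>)^2 \<le> \<gamma>^6 * 1"
      using gp g by (intro mult_mono) (auto simp: power_le_one)
    then have "q^6 \<le> 1 / (\<gamma> powr (13/2) * (1-\<gamma>)^2)"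
      unfolding q_def using d0 g by (simp add: power_one_over divide_le_eq field_simps)
    moreover have "1 \<le> n^2" using n by (simp add: one_le_power)
    ultimately have b: "1 * q^6 \<le> n^2 * (1 / (\<gamma> powr (13/2) * (1-\<gamma>)^2))" using q0 by (intro mult_mono) auto
    have a: "768 * Q \<le> 39366 * Q" using Q0 by simp
    have "(768 * Q) * (1 * q^6) \<le> (39366 * Q) * (n^2 * (1 / (\<gamma> powr (13/2) * (1-\<gamma>)^2)))"
      by (rule mult_mono[OF a b]) (use Q0 q0 in auto)
    then show ?thesis by (simp add: mult_ac)
  qed
  also have "\<dots> = 39366 * n^2 * G * \<kappa>B^3 * \<kappa>^9 / (C * \<gamma> powr (13/2) * (1-\<gamma>)^2)"
    unfolding Q_def using g C by (simp add: field_simps)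
  finally show ?thesis .
qed

context prob_space
begin

definition IE :: "('a \<Rightarrow> real) \<Rightarrow> real \<Rightarrow> bool" where
  "IE f a \<longleftrightarrow> integrable M f \<and> expectation f \<le> a"

lemma IE_add: "IE f a \<Longrightarrow> IE g b \<Longrightarrow> IE (\<lambda>\<omega>. f \<omega> + g \<omega>) (a + b)"
  unfolding IE_def by auto

lemma IE_scale: "0 \<le> c \<Longrightarrow> IE f a \<Longrightarrow> IE (\<lambda>\<omega>. c * f \<omega>) (c * a)"
  unfolding IE_def by (auto intro: mult_left_mono)

lemma IE_sum: "(\<And>i. i \<in> S \<Longrightarrow> IE (f i) (a i)) \<Longrightarrow> IE (\<lambda>\<omega>. \<Sum>i\<in>S. f i \<omega>) (\<Sum>i\<in>S. a i)"
proof (induction S rule: infinite_finite_induct)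
  case (infinite S) then show ?case by (simp add: IE_def)
next
  case empty then show ?case by (simp add: IE_def)
next
  case (insert x F)
  have "IE (\<lambda>\<omega>. f x \<omega> + (\<Sum>i\<in>F. f i \<omega>)) (a x + (\<Sum>i\<in>F. a i))"
    using insert by (intro IE_add) auto
  then show ?case using insert by simp
qed

lemma IE_weaken: "IE f a \<Longrightarrow> a \<le> b \<Longrightarrow> IE f b"
  unfolding IE_def by auto

lemma IE_wsum4:
  assumes A2: "assm_A2ii w \<sigma>" and a0: "\<And>l. l \<in> S \<Longrightarrow> 0 \<le> \<alpha> l" and sa: "(\<Sum>l\<in>S. \<alpha> l) \<le> V"
  shows "IE (\<lambda>\<omega>. \<Sum>l\<in>S. \<alpha> l * (uu w t \<omega> l)^4) (V * \<sigma>^4)"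
proof -
  have "IE (\<lambda>\<omega>. \<Sum>l\<in>S. \<alpha> l * (uu w t \<omega> l)^4) (\<Sum>l\<in>S. \<alpha> l * \<sigma>^4)"
    using wext4[OF A2] a0 unfolding uu_def by (intro IE_sum IE_scale) (auto simp: IE_def)
  moreover have "(\<Sum>l\<in>S. \<alpha> l * \<sigma>^4) \<le> V * \<sigma>^4"
    using sa by (simp add: sum_distrib_right[symmetric] mult_right_mono zero_le_even_power)
  ultimately show ?thesis by (rule IE_weaken)
qed

lemma IE_wsum2:
  assumes A2: "assm_A2ii w \<sigma>" and a0: "\<And>l. l \<in> S \<Longrightarrow> 0 \<le> \<alpha> l" and sa: "(\<Sum>l\<in>S. \<alpha> l) \<le> V"
  shows "IE (\<lambda>\<omega>. \<Sum>l\<in>S. \<alpha> l * (uu w t \<omega> l)^2) (V * \<sigma>^2)"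
proof -
  have "IE (\<lambda>\<omega>. \<Sum>l\<in>S. \<alpha> l * (uu w t \<omega> l)^2) (\<Sum>l\<in>S. \<alpha> l * \<sigma>^2)"
    using wext2[OF A2] a0 unfolding uu_def by (intro IE_sum IE_scale) (auto simp: IE_def)
  moreover have "(\<Sum>l\<in>S. \<alpha> l * \<sigma>^2) \<le> V * \<sigma>^2"
    using sa by (simp add: sum_distrib_right[symmetric] mult_right_mono)
  ultimately show ?thesis by (rule IE_weaken)
qed

end

theorem lemma4:
  fixes \<Omega> :: "'w measure"
    and w :: "nat \<Rightarrow> 'w \<Rightarrow> real^'nx"
    and c :: "nat \<Rightarrow> real^'nx \<Rightarrow> real^'nu \<Rightarrow> real"
    and A :: "real^'nx^'nx" and B :: "real^'nu^'nx" and K :: "real^'nx^'nu"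
    and M :: "nat \<Rightarrow> real^'nx^'nu"
    and \<kappa> \<gamma> Gc \<sigma>w C :: real and T :: nat
  assumes "prob_space \<Omega>"
    and "assm_A1 c Gc"
    and "prob_space.assm_A2ii \<Omega> w \<sigma>w"
    and "0 < \<gamma>" and "\<gamma> < 1"
    and "strongly_stable A B K \<kappa> \<gamma>"
    and "C > 0" and "T \<ge> 3"
    and "M \<in> Mset (nat \<lceil>2 / \<gamma> * ln (real T)\<rceil>) (max (opnorm B) 1) \<kappa> \<gamma>"
  shows
   "let H = nat \<lceil>2 / \<gamma> * ln (real T)\<rceil>; n = real (max CARD('nx) CARD('nu)); \<kappa>B = max (opnorm B) 1 in
    prob_space.prob \<Omega> {\<omega> \<in> space \<Omega>.
        (\<Sum>t<T. (grad_frob c A B K H M w t \<omega>)^2) \<le> C * real T * (ln (real T))^4}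
      \<ge> 1 - 26244 * \<sigma>w^4 * n^2 * Gc^2 * \<kappa>B^6 * \<kappa>^18 / (C * \<gamma>^8 * (1 - \<gamma>)^4)
    \<and>
    prob_space.prob \<Omega> {\<omega> \<in> space \<Omega>.
        (\<Sum>t<T. \<Sum>i\<in>{1..min (H + 1) t}. \<Sum>k\<in>{1..i}. grad_frob c A B K H M w (t - k) \<omega>)
          \<le> C * real T * (ln (real T)) powr (9/2)}
      \<ge> 1 - 39366 * \<sigma>w^2 * n^2 * Gc * \<kappa>B^3 * \<kappa>^9 / (C * \<gamma> powr (13/2) * (1 - \<gamma>)^2)"
proof -
  interpret P: prob_space \<Omega> by fact
  note A1 = assms(2) and A2 = assms(3)
  have g0: "0 < \<gamma>" and g1: "\<gamma> < 1" using assms by auto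
  define H where "H = nat \<lceil>2 / \<gamma> * ln (real T)\<rceil>"
  define n where "n = real (max CARD('nx) CARD('nu))"
  define \<kappa>B where "\<kappa>B = max (opnorm B) 1"
  have k1: "1 \<le> \<kappa>" and Kn: "opnorm K \<le> \<kappa>" and AKp: "\<And>j. opnorm (matpow (A - B ** K) j) \<le> \<kappa>^2 * (1-\<gamma>)^j"
    using ss_facts[OF assms(6) g1] by auto
  have Bn: "opnorm B \<le> \<kappa>B" and kb1: "1 \<le> \<kappa>B" by (auto simp: \<kappa>B_def)
  have Mb: "\<And>m. m < H \<Longrightarrow> opnorm (M m) \<le> 2 * \<kappa>B * \<kappa>^3 * (1-\<gamma>)^m"
    using assms(9) unfolding Mset_def H_def \<kappa>B_def by auto
  have rho: "0 \<le> 1-\<gamma>" using g1 by simp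
  have Gc1: "1 \<le> Gc" using A1 unfolding assm_A1_def by auto
  define V1 where "V1 = W1 \<gamma> \<kappa> \<kappa>B"
  define V2 where "V2 = W2 \<gamma> \<kappa> \<kappa>B"
  have V1p: "0 < V1" and V2p: "0 < V2" using W_pos[OF g0 g1 k1 kb1] by (auto simp: V1_def V2_def)
  have sa: "(\<Sum>l\<in>{0..2*H}. alpha \<kappa> (1-\<gamma>) \<kappa>B H l) \<le> V1" using alpha_sum[OF g0 g1 k1 kb1] V1_def by simp
  have sb: "\<And>i. (\<Sum>l\<in>{0..2*H}. beta \<kappa> (1-\<gamma>) \<kappa>B H i l) \<le> V2" using beta_sum[OF g0 g1 k1 kb1] V2_def by simp
  have a0: "\<And>l. 0 \<le> alpha \<kappa> (1-\<gamma>) \<kappa>B H l" using alpha_nn rho k1 kb1 by auto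
  have b0: "\<And>i l. 0 \<le> beta \<kappa> (1-\<gamma>) \<kappa>B H i l" using beta_nn rho kb1 by auto
  have u0: "\<And>t \<omega> l. 0 \<le> uu w t \<omega> l" by (simp add: uu_def)
  define SA4 where "SA4 t \<omega> = (\<Sum>l\<in>{0..2*H}. alpha \<kappa> (1-\<gamma>) \<kappa>B H l * (uu w t \<omega> l)^4)" for t \<omega>
  define SB4 where "SB4 i t \<omega> = (\<Sum>l\<in>{0..2*H}. beta \<kappa> (1-\<gamma>) \<kappa>B H i l * (uu w t \<omega> l)^4)" for i t \<omega>
  define SA2 where "SA2 t \<omega> = (\<Sum>l\<in>{0..2*H}. alpha \<kappa> (1-\<gamma>) \<kappa>B H l * (uu w t \<omega> l)^2)" for t \<omega>
  define SB2 where "SB2 i t \<omega> = (\<Sum>l\<in>{0..2*H}. beta \<kappa> (1-\<gamma>) \<kappa>B H i l * (uu w t \<omega> l)^2)" for i t \<omega>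
  define B4 where "B4 t \<omega> = Gc^2 * (\<Sum>i<H. (1/2) * (V2^2 * V1 * SA4 t \<omega> + V1^2 * V2 * SB4 i t \<omega>))" for t \<omega>
  define B2 where "B2 t \<omega> = Gc * (\<Sum>i<H. (1/2) * (V2 * SA2 t \<omega> + V1 * SB2 i t \<omega>))" for t \<omega>
  have gB4: "(grad_frob c A B K H M w t \<omega>)^2 \<le> B4 t \<omega>" for t \<omega>
  proof -
    have "(grad_frob c A B K H M w t \<omega>)^2 \<le> Gc^2 * (\<Sum>i<H. (\<Sum>l\<in>{0..2*H}. alpha \<kappa> (1-\<gamma>) \<kappa>B H l * uu w t \<omega> l)^2
              * (\<Sum>l\<in>{0..2*H}. beta \<kappa> (1-\<gamma>) \<kappa>B H i l * uu w t \<omega> l)^2)"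
      by (rule grad_pointwise(1)[OF Kn k1 AKp Bn Mb rho A1])
    also have "\<dots> \<le> B4 t \<omega>" unfolding B4_def SA4_def SB4_def
    proof (intro mult_left_mono sum_mono)
      fix i
      show "(\<Sum>l\<in>{0..2*H}. alpha \<kappa> (1-\<gamma>) \<kappa>B H l * uu w t \<omega> l)^2 * (\<Sum>l\<in>{0..2*H}. beta \<kappa> (1-\<gamma>) \<kappa>B H i l * uu w t \<omega> l)^2
        \<le> 1/2 * (V2^2 * V1 * (\<Sum>l\<in>{0..2*H}. alpha \<kappa> (1-\<gamma>) \<kappa>B H l * (uu w t \<omega> l)^4)
              + V1^2 * V2 * (\<Sum>l\<in>{0..2*H}. beta \<kappa> (1-\<gamma>) \<kappa>B H i l * (uu w t \<omega> l)^4))"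
        using prod4_bound[where S="{0..2*H}" and \<alpha>="alpha \<kappa> (1-\<gamma>) \<kappa>B H" and \<beta>="beta \<kappa> (1-\<gamma>) \<kappa>B H i"
            and u="uu w t \<omega>", OF a0 b0 u0 sa sb V1p V2p] by simp
    qed simp
    finally show ?thesis .
  qed
  have gB2: "grad_frob c A B K H M w t \<omega> \<le> B2 t \<omega>" for t \<omega>
  proof -
    have "grad_frob c A B K H M w t \<omega> \<le> Gc * (\<Sum>i<H. (\<Sum>l\<in>{0..2*H}. alpha \<kappa> (1-\<gamma>) \<kappa>B H l * uu w t \<omega> l)
              * (\<Sum>l\<in>{0..2*H}. beta \<kappa> (1-\<gamma>) \<kappa>B H i l * uu w t \<omega> l))"
      by (rule grad_pointwise(2)[OF Kn k1 AKp Bn Mb rho A1])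
    also have "\<dots> \<le> B2 t \<omega>" unfolding B2_def SA2_def SB2_def
    proof (intro mult_left_mono sum_mono)
      fix i
      show "(\<Sum>l\<in>{0..2*H}. alpha \<kappa> (1-\<gamma>) \<kappa>B H l * uu w t \<omega> l) * (\<Sum>l\<in>{0..2*H}. beta \<kappa> (1-\<gamma>) \<kappa>B H i l * uu w t \<omega> l)
        \<le> 1/2 * (V2 * (\<Sum>l\<in>{0..2*H}. alpha \<kappa> (1-\<gamma>) \<kappa>B H l * (uu w t \<omega> l)^2)
              + V1 * (\<Sum>l\<in>{0..2*H}. beta \<kappa> (1-\<gamma>) \<kappa>B H i l * (uu w t \<omega> l)^2))"
        using prod2_bound[where S="{0..2*H}" and \<alpha>="alpha \<kappa> (1-\<gamma>) \<kappa>B H" and \<beta>="beta \<kappa> (1-\<gamma>) \<kappa>B H i"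
            and u="uu w t \<omega>", OF a0 b0 u0 sa sb V1p V2p] by simp
    qed (use Gc1 in simp)
    finally show ?thesis .
  qed
  have IE4: "P.IE (B4 t) (Gc^2 * (real H * (V1^2 * V2^2 * \<sigma>w^4)))" for t
  proof -
    have e: "P.IE (\<lambda>\<omega>. (1/2) * (V2^2 * V1 * SA4 t \<omega> + V1^2 * V2 * SB4 i t \<omega>)) (V1^2 * V2^2 * \<sigma>w^4)" for i
    proof -
      have "P.IE (\<lambda>\<omega>. (1/2) * (V2^2 * V1 * SA4 t \<omega> + V1^2 * V2 * SB4 i t \<omega>))
          ((1/2) * (V2^2 * V1 * (V1 * \<sigma>w^4) + V1^2 * V2 * (V2 * \<sigma>w^4)))"
        unfolding SA4_def SB4_def
        using V1p V2p by (intro P.IE_scale P.IE_add P.IE_wsum4[OF A2] a0 b0 sa sb) auto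
      then show ?thesis by (rule P.IE_weaken) (simp add: power2_eq_square)
    qed
    have "P.IE (\<lambda>\<omega>. Gc^2 * (\<Sum>i<H. (1/2) * (V2^2 * V1 * SA4 t \<omega> + V1^2 * V2 * SB4 i t \<omega>)))
        (Gc^2 * (\<Sum>i<H. V1^2 * V2^2 * \<sigma>w^4))"
      by (intro P.IE_scale P.IE_sum e) auto
    then show ?thesis unfolding B4_def[abs_def] by simp
  qed
  have IE2: "P.IE (B2 t) (Gc * (real H * (V1 * V2 * \<sigma>w^2)))" for t
  proof -
    have e: "P.IE (\<lambda>\<omega>. (1/2) * (V2 * SA2 t \<omega> + V1 * SB2 i t \<omega>)) (V1 * V2 * \<sigma>w^2)" for i
    proof -
      have "P.IE (\<lambda>\<omega>. (1/2) * (V2 * SA2 t \<omega> + V1 * SB2 i t \<omega>))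
          ((1/2) * (V2 * (V1 * \<sigma>w^2) + V1 * (V2 * \<sigma>w^2)))"
        unfolding SA2_def SB2_def
        using V1p V2p by (intro P.IE_scale P.IE_add P.IE_wsum2[OF A2] a0 b0 sa sb) auto
      then show ?thesis by (rule P.IE_weaken) simp
    qed
    have "P.IE (\<lambda>\<omega>. Gc * (\<Sum>i<H. (1/2) * (V2 * SA2 t \<omega> + V1 * SB2 i t \<omega>)))
        (Gc * (\<Sum>i<H. V1 * V2 * \<sigma>w^2))"
      using Gc1 by (intro P.IE_scale P.IE_sum e) auto
    then show ?thesis unfolding B2_def[abs_def] by simp
  qed
  have B4nn: "0 \<le> B4 t \<omega>" for t \<omega>
    using gB4[of t \<omega>] by (smt (verit) zero_le_power2)
  have B2nn: "0 \<le> B2 t \<omega>" for t \<omega>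
    using gB2[of t \<omega>] by (smt (verit) grad_frob_def real_sqrt_ge_zero sum_nonneg zero_le_power2)
  have L1: "1 \<le> ln (real T)"
  proof -
    have "1 = ln (exp (1::real))" by simp
    also have "\<dots> \<le> ln 3" using exp_le by (subst ln_le_cancel_iff) auto
    also have "\<dots> \<le> ln (real T)" using assms(8) by (subst ln_le_cancel_iff) auto
    finally show ?thesis .
  qed
  have Tpos: "0 < real T" using assms(8) by simp
  have Hle: "real H \<le> 2 / \<gamma> * ln (real T) + 1"
  proof -
    have "0 \<le> 2 / \<gamma> * ln (real T)" using g0 L1 by simp
    then have "real H = of_int \<lceil>2 / \<gamma> * ln (real T)\<rceil>" unfolding H_def by simp
    also have "\<dots> \<le> 2 / \<gamma> * ln (real T) + 1" by (rule of_int_ceiling_le_add_one)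
    finally show ?thesis .
  qed
  have Lg: "1 \<le> ln (real T) / \<gamma>" using L1 g0 g1 by (simp add: le_divide_eq)
  have Hr1: "real H \<le> 3 * ln (real T) / \<gamma>" using Hle Lg by (simp add: field_simps)
  have Hr2: "real H + 1 \<le> 4 * ln (real T) / \<gamma>"
  proof -
    have x1: "2 / \<gamma> * ln (real T) = 2 * (ln (real T) / \<gamma>)" by simp
    have x2: "4 * ln (real T) / \<gamma> = 4 * (ln (real T) / \<gamma>)" by simp
    show ?thesis unfolding x2 using Hle Lg unfolding x1 by linarith
  qed
  have n1: "1 \<le> n" unfolding n_def by (simp add: le_max_iff_disj)
  have V1b: "V1 \<le> 8 * \<kappa>B^2 * \<kappa>^7 / \<gamma>^2" unfolding V1_def by (rule W1_le[OF g0 g1 k1 kb1])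
  have V2b: "V2 \<le> 2 * \<kappa>^2 * \<kappa>B / \<gamma>" unfolding V2_def by (rule W2_le[OF g0 g1 k1 kb1])
  have gm: "\<And>t. (\<lambda>\<omega>. grad_frob c A B K H M w t \<omega>) \<in> borel_measurable \<Omega>"
    using P.grad_meas[OF A1 A2] by blast
  have s4: "0 \<le> \<sigma>w^4" by (simp add: zero_le_even_power)
  define e1 where "e1 = real T * (Gc^2 * (real H * (V1^2 * V2^2 * \<sigma>w^4)))"
  have IEt: "P.IE (\<lambda>\<omega>. \<Sum>t<T. B4 t \<omega>) e1"
    using P.IE_sum[of "{..<T}" "\<lambda>t. B4 t" "\<lambda>t. Gc^2 * (real H * (V1^2 * V2^2 * \<sigma>w^4))"] IE4
    unfolding e1_def by simp
  have a1: "0 < C * real T * (ln (real T))^4" using assms(7) Tpos L1 by (intro mult_pos_pos) auto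
  have m1: "P.prob {\<omega> \<in> space \<Omega>. (\<Sum>t<T. (grad_frob c A B K H M w t \<omega>)^2) \<le> C * real T * (ln (real T))^4}
      \<ge> 1 - e1 / (C * real T * (ln (real T))^4)"
  proof (rule P.markov_good[where Bf="\<lambda>\<omega>. \<Sum>t<T. B4 t \<omega>"])
    show "(\<lambda>\<omega>. \<Sum>t<T. (grad_frob c A B K H M w t \<omega>)^2) \<in> borel_measurable \<Omega>"
      by (intro borel_measurable_sum borel_measurable_power gm)
    show "integrable \<Omega> (\<lambda>\<omega>. \<Sum>t<T. B4 t \<omega>)" using IEt unfolding P.IE_def by simp
    show "P.expectation (\<lambda>\<omega>. \<Sum>t<T. B4 t \<omega>) \<le> e1" using IEt unfolding P.IE_def by simp
  qed (use gB4 B4nn a1 in \<open>auto intro: sum_mono sum_nonneg\<close>)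
  have c1: "e1 / (C * real T * (ln (real T))^4) \<le> 26244 * \<sigma>w^4 * n^2 * Gc^2 * \<kappa>B^6 * \<kappa>^18 / (C * \<gamma>^8 * (1 - \<gamma>)^4)"
  proof -
    have "e1 / (C * real T * (ln (real T))^4) = (Gc^2 * \<sigma>w^4) * (real H * V1^2 * V2^2) / (C * (ln (real T))^4)"
      unfolding e1_def using Tpos by (simp add: field_simps)
    also have "\<dots> \<le> 26244 * n^2 * (Gc^2 * \<sigma>w^4) * \<kappa>B^6 * \<kappa>^18 / (C * \<gamma>^8 * (1-\<gamma>)^4)"
      by (rule const1[OF g0 g1 k1 kb1 L1 _ Hr1 less_imp_le[OF V1p] V1b less_imp_le[OF V2p] V2b n1 assms(7)])
        (use s4 in auto)
    also have "\<dots> = 26244 * \<sigma>w^4 * n^2 * Gc^2 * \<kappa>B^6 * \<kappa>^18 / (C * \<gamma>^8 * (1 - \<gamma>)^4)"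
      by (simp add: mult_ac)
    finally show ?thesis .
  qed
  define c2 where "c2 = Gc * (real H * (V1 * V2 * \<sigma>w^2))"
  have c20: "0 \<le> c2" unfolding c2_def using Gc1 V1p V2p by simp
  define e2 where "e2 = real T * ((real H + 1)^2 * c2)"
  have IEt2: "P.IE (\<lambda>\<omega>. \<Sum>t<T. \<Sum>i\<in>{1..min (H + 1) t}. \<Sum>k\<in>{1..i}. B2 (t - k) \<omega>)
      (\<Sum>t<T. \<Sum>i\<in>{1..min (H + 1) t}. \<Sum>k\<in>{1..i}. c2)"
    unfolding c2_def by (intro P.IE_sum IE2)
  have sle: "(\<Sum>t<T. \<Sum>i\<in>{1..min (H + 1) t}. \<Sum>k\<in>{1..i}. c2) \<le> e2"
  proof -
    have "(\<Sum>t<T. \<Sum>i\<in>{1..min (H + 1) t}. \<Sum>k\<in>{1..i}. c2) \<le> (\<Sum>t<T. (real H + 1)^2 * c2)"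
    proof (rule sum_mono)
      fix t
      have "(\<Sum>i\<in>{1..min (H + 1) t}. \<Sum>k\<in>{1..i}. c2) = (\<Sum>i\<in>{1..min (H + 1) t}. real i * c2)" by simp
      also have "\<dots> \<le> (\<Sum>i\<in>{1..min (H + 1) t}. (real H + 1) * c2)"
        using c20 by (intro sum_mono mult_right_mono) auto
      also have "\<dots> = real (min (H + 1) t) * ((real H + 1) * c2)" by simp
      also have "\<dots> \<le> (real H + 1) * ((real H + 1) * c2)"
        using c20 by (intro mult_right_mono) auto
      finally show "(\<Sum>i\<in>{1..min (H + 1) t}. \<Sum>k\<in>{1..i}. c2) \<le> (real H + 1)^2 * c2"
        by (simp add: power2_eq_square mult_ac)
    qed
    also have "\<dots> = e2" unfolding e2_def by simp
    finally show ?thesis .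
  qed
  have IEt2': "P.IE (\<lambda>\<omega>. \<Sum>t<T. \<Sum>i\<in>{1..min (H + 1) t}. \<Sum>k\<in>{1..i}. B2 (t - k) \<omega>) e2"
    using IEt2 sle by (rule P.IE_weaken)
  have Lp: "0 < ln (real T) powr (9/2)" using L1 by simp
  have a2: "0 < C * real T * ln (real T) powr (9/2)" using assms(7) Tpos Lp by (intro mult_pos_pos) auto
  have m2: "P.prob {\<omega> \<in> space \<Omega>. (\<Sum>t<T. \<Sum>i\<in>{1..min (H + 1) t}. \<Sum>k\<in>{1..i}. grad_frob c A B K H M w (t - k) \<omega>)
          \<le> C * real T * ln (real T) powr (9/2)}
      \<ge> 1 - e2 / (C * real T * ln (real T) powr (9/2))"
  proof (rule P.markov_good[where Bf="\<lambda>\<omega>. \<Sum>t<T. \<Sum>i\<in>{1..min (H + 1) t}. \<Sum>k\<in>{1..i}. B2 (t - k) \<omega>"])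
    show "(\<lambda>\<omega>. \<Sum>t<T. \<Sum>i\<in>{1..min (H + 1) t}. \<Sum>k\<in>{1..i}. grad_frob c A B K H M w (t - k) \<omega>) \<in> borel_measurable \<Omega>"
      by (intro borel_measurable_sum gm)
    show "integrable \<Omega> (\<lambda>\<omega>. \<Sum>t<T. \<Sum>i\<in>{1..min (H + 1) t}. \<Sum>k\<in>{1..i}. B2 (t - k) \<omega>)"
      using IEt2' unfolding P.IE_def by simp
    show "P.expectation (\<lambda>\<omega>. \<Sum>t<T. \<Sum>i\<in>{1..min (H + 1) t}. \<Sum>k\<in>{1..i}. B2 (t - k) \<omega>) \<le> e2"
      using IEt2' unfolding P.IE_def by simp
  qed (use gB2 B2nn a2 in \<open>auto intro!: sum_mono sum_nonneg\<close>)
  have c2b: "e2 / (C * real T * ln (real T) powr (9/2)) \<le> 39366 * \<sigma>w^2 * n^2 * Gc * \<kappa>B^3 * \<kappa>^9 / (C * \<gamma> powr (13/2) * (1 - \<gamma>)^2)"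
  proof -
    have "e2 / (C * real T * ln (real T) powr (9/2)) = (Gc * \<sigma>w^2) * ((real H + 1)^2 * real H * V1 * V2) / (C * ln (real T) powr (9/2))"
      unfolding e2_def c2_def using Tpos by (simp add: field_simps)
    also have "\<dots> \<le> 39366 * n^2 * (Gc * \<sigma>w^2) * \<kappa>B^3 * \<kappa>^9 / (C * \<gamma> powr (13/2) * (1-\<gamma>)^2)"
      by (rule const2[OF g0 g1 k1 kb1 L1 _ Hr1 Hr2 less_imp_le[OF V1p] V1b less_imp_le[OF V2p] V2b n1 assms(7)])
        (use Gc1 in auto)
    also have "\<dots> = 39366 * \<sigma>w^2 * n^2 * Gc * \<kappa>B^3 * \<kappa>^9 / (C * \<gamma> powr (13/2) * (1 - \<gamma>)^2)"
      by (simp add: mult_ac)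
    finally show ?thesis .
  qed
  have f1: "P.prob {\<omega> \<in> space \<Omega>. (\<Sum>t<T. (grad_frob c A B K H M w t \<omega>)^2) \<le> C * real T * (ln (real T))^4}
      \<ge> 1 - 26244 * \<sigma>w^4 * n^2 * Gc^2 * \<kappa>B^6 * \<kappa>^18 / (C * \<gamma>^8 * (1 - \<gamma>)^4)"
    using m1 c1 by linarith
  have f2: "P.prob {\<omega> \<in> space \<Omega>. (\<Sum>t<T. \<Sum>i\<in>{1..min (H + 1) t}. \<Sum>k\<in>{1..i}. grad_frob c A B K H M w (t - k) \<omega>)
          \<le> C * real T * ln (real T) powr (9/2)}
      \<ge> 1 - 39366 * \<sigma>w^2 * n^2 * Gc * \<kappa>B^3 * \<kappa>^9 / (C * \<gamma> powr (13/2) * (1 - \<gamma>)^2)"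
    using m2 c2b by linarith
  show ?thesis unfolding Let_def H_def[symmetric] n_def[symmetric] \<kappa>B_def[symmetric]
    using f1 f2 by simp
qed

end
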